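(* Let $\mathbf{X}$ be a Markov chain on $\mathbb{R}^d$ given by $X(t+1)=a(X(t),N(t+1))$, where $\mathbf{N}$ is an i.i.d. sequence in $\mathbb{R}^m$ and $a:\mathbb{R}^{d}\times\mathbb{R}^m\to\mathbb{R}^d$ is continuous. Assume (A1), (A2), (A3) below. Let $\alpha\in(0,1)$ and let $\psi:\mathbb{R}^d\to\mathbb{R}^\ell$ be continuously differentiable with $\|\psi\|^2\in L_\infty^v$ and $\|\nabla\psi\|^2\in L_\infty^v$. Then there is a version of the pair process $(\mathbf{X},\boldsymbol{\varphi})$, indexed by $t\in\mathbb{Z}$, that is stationary, with $$\varphi(t)=\sum_{k=0}^\infty\alpha^k\,[\mathcal{A}(t-k+1)\mathcal{A}(t-k+2)\cdots\mathcal{A}(t)]^{T}\,\nabla\psi(X(t-k)),\qquad t\in\mathbb{Z},$$ where the matrix product is the identity for $k=0$ and $\mathcal{A}(s)=\nabla a(X(s-1),N(s))$. (This process satisfies $\varphi(t)=\alpha\mathcal{A}^{T}(t)\varphi(t-1)+\nabla\psi(X(t))$.)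
   Context: Notation: $v:\mathbb{R}^d\to[1,\infty)$ is a fixed continuous function; $\|f\|_v=\sup_x|f(x)|/v(x)$ and $L_\infty^v=\{f \text{ measurable}:\|f\|_v<\infty\}$. $\nabla a(x,n)$ is the $d\times d$ matrix whose $i$th column is $\nabla_x a_i(x,n)$ (gradient in the first variable). $\nabla\psi(x)$ is the $d\times\ell$ matrix with entries $[\nabla\psi(x)]_{i,j}=\partial\psi_j(x)/\partial x_i$. The sensitivity process is $\mathcal{S}(0)=I$, $\mathcal{S}(t+1)=\mathcal{A}^{T}(t+1)\mathcal{S}(t)$, i.e. $\mathcal{S}_{ij}(t)=\partial X_i(t)/\partial X_j(0)$. (A1) $v$-uniform ergodicity: there exist a unique invariant probability measure $\pi$, $b_0<\infty$ and $0<\rho_0<1$ such that for each $f\in L_\infty^v$, $|\mathsf{E}_x[f(X(t))]-\pi(f)|\le b_0\rho_0^t\|f\|_v v(x)$ for all $t\ge0$, $x\in\mathbb{R}^d$. (A2) The disturbance process $\mathbf{N}$ does not depend on the initial condition $X(0)$; and $a$ is continuously differentiable in its first variable with $\sup_{x,n}\|\nabla a(x,n)\|<\infty$ for some matrix norm. (A3) For any $C^1$ functions $f,g:\mathbb{R}^d\to\mathbb{R}$ with $f^2,g^2,\|\nabla f\|^2,\|\nabla g\|^2\in L_\infty^v$, for the stationary version of the chain (marginal $\pi$): $\sum_{t=0}^\infty\big|\mathsf{E}_\pi[\nabla f(X(t))^{T}\mathcal{S}(t)\nabla g(X(0))]\big|<\infty$ and $\sum_{t=0}^\infty\mathsf{E}_\pi\big[|\nabla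 f(X(t))^{T}\mathcal{S}(t)\nabla g(X(0))|\big]<\infty$. *)

theory Defs
  imports "HOL-Probability.Probability"
begin

definition in_Linf_v :: "('a::euclidean_space \<Rightarrow> real) \<Rightarrow> ('a \<Rightarrow> real) \<Rightarrow> bool" where
  "in_Linf_v v f \<longleftrightarrow> f \<in> borel_measurable borel \<and> bdd_above (range (\<lambda>x. \<bar>f x\<bar> / v x))"

definition vnorm :: "('a \<Rightarrow> real) \<Rightarrow> ('a \<Rightarrow> real) \<Rightarrow> real" where
  "vnorm v f = (SUP x. \<bar>f x\<bar> / v x)"

text \<open>Sample path X(t) of the chain from X(0)=x, where ns t plays the role of N(t+1).\<close>
primrec chain :: "('d \<Rightarrow> 'm \<Rightarrow> 'd) \<Rightarrow> 'd \<Rightarrow> (nat \<Rightarrow> 'm) \<Rightarrow> nat \<Rightarrow> 'd" where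
  "chain a x ns 0 = x"
| "chain a x ns (Suc t) = a (chain a x ns t) (ns t)"

definition Ex_chain :: "('d::euclidean_space \<Rightarrow> 'm \<Rightarrow> 'd) \<Rightarrow> 'm measure \<Rightarrow> 'd \<Rightarrow> ('d \<Rightarrow> real) \<Rightarrow> nat \<Rightarrow> real" where
  "Ex_chain a \<mu> x f t = (\<integral>ns. f (chain a x ns t) \<partial>(\<Pi>\<^sub>M i\<in>(UNIV::nat set). \<mu>))"

definition invariant_for :: "('d::euclidean_space \<Rightarrow> 'm \<Rightarrow> 'd) \<Rightarrow> 'm measure \<Rightarrow> 'd measure \<Rightarrow> bool" where
  "invariant_for a \<mu> \<pi> \<longleftrightarrow>
     (\<forall>A\<in>sets borel. emeasure \<pi> A = (\<integral>\<^sup>+x. emeasure \<mu> {n\<in>space \<mu>. a x n \<in> A} \<partial>\<pi>))"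

primrec sens :: "(real^'d \<Rightarrow> 'm \<Rightarrow> real^'d^'d) \<Rightarrow> (real^'d \<Rightarrow> 'm \<Rightarrow> real^'d)
                  \<Rightarrow> real^'d \<Rightarrow> (nat \<Rightarrow> 'm) \<Rightarrow> nat \<Rightarrow> real^'d^'d" where
  "sens Ga a x ns 0 = mat 1"
| "sens Ga a x ns (Suc t) = transpose (Ga (chain a x ns t) (ns t)) ** sens Ga a x ns t"

text \<open>prodA A t k = A(t-k+1) A(t-k+2) ... A(t) (identity for k = 0).\<close>
primrec prodA :: "(int \<Rightarrow> real^'d^'d) \<Rightarrow> int \<Rightarrow> nat \<Rightarrow> real^'d^'d" where
  "prodA A t 0 = mat 1"
| "prodA A t (Suc k) = A (t - int k) ** prodA A t k"

definition phi_term :: "real \<Rightarrow> (int \<Rightarrow> real^'d^'d) \<Rightarrow> (real^'d \<Rightarrow> real^'l^'d)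
                         \<Rightarrow> (int \<Rightarrow> real^'d) \<Rightarrow> int \<Rightarrow> nat \<Rightarrow> real^'l^'d" where
  "phi_term \<alpha> A G Xs t k = (\<alpha> ^ k) *\<^sub>R (transpose (prodA A t k) ** G (Xs (t - int k)))"

definition phi :: "real \<Rightarrow> (int \<Rightarrow> real^'d^'d) \<Rightarrow> (real^'d \<Rightarrow> real^'l^'d)
                     \<Rightarrow> (int \<Rightarrow> real^'d) \<Rightarrow> int \<Rightarrow> real^'l^'d" where
  "phi \<alpha> A G Xs t = (\<Sum>k. phi_term \<alpha> A G Xs t k)"

end

theory Submission
  imports Defs
begin


lemma chain_Suc_shift:
  "chain a x ns (Suc n) = chain a (a x (ns 0)) (\<lambda>i. ns (Suc i)) n"
  by (induction n arbitrary: x ns) (simp_all)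

locale MC =
  fixes a :: "real^'d \<Rightarrow> real^'m \<Rightarrow> real^'d" and \<mu> :: "(real^'m) measure"
    and \<pi> :: "(real^'d) measure"
  assumes noise_prob: "prob_space \<mu>" and noise_sets: "sets \<mu> = sets borel"
    and a_cont: "continuous_on UNIV (\<lambda>(x, n). a x n)"
    and pi_prob: "prob_space \<pi>" and pi_sets: "sets \<pi> = sets borel"
    and pi_inv: "invariant_for a \<mu> \<pi>"
begin

abbreviation "S \<equiv> (\<Pi>\<^sub>M i\<in>(UNIV::nat set). \<mu>)"
abbreviation "\<Omega> \<equiv> \<pi> \<Otimes>\<^sub>M S"

lemma space_mu[simp]: "space \<mu> = UNIV"
  using sets_eq_imp_space_eq[OF noise_sets] by simp

lemma space_pi[simp]: "space \<pi> = UNIV"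
  using sets_eq_imp_space_eq[OF pi_sets] by simp

lemma space_S[simp]: "space S = UNIV"
  by (simp add: space_PiM)

lemma seq: "sequence_space \<mu>"
  using noise_prob by (simp add: sequence_space_def product_prob_space_def
      product_prob_space_axioms_def product_sigma_finite_def prob_space_imp_sigma_finite)

lemma S_prob: "prob_space S"
  using noise_prob by (intro prob_space_PiM) auto

lemma Om_prob: "prob_space \<Omega>"
  using S_prob pi_prob by (simp add: prob_space_pair)

lemma a_meas[measurable]: "(\<lambda>p. a (fst p) (snd p)) \<in> borel_measurable borel"
proof -
  have "continuous_on UNIV (\<lambda>p. a (fst p) (snd p))"
    using a_cont by (simp add: case_prod_beta')
  then show ?thesis by (rule borel_measurable_continuous_onI)
qed

lemma a_meas2[measurable (raw)]:
  assumes [measurable]: "f \<in> borel_measurable M" "g \<in> borel_measurable M"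
  shows "(\<lambda>x. a (f x) (g x)) \<in> borel_measurable M"
proof -
  have "(\<lambda>x. (f x, g x)) \<in> M \<rightarrow>\<^sub>M borel \<Otimes>\<^sub>M borel"
    using assms by (rule measurable_Pair)
  then have "(\<lambda>x. (f x, g x)) \<in> borel_measurable M" by (simp only: borel_prod)
  from measurable_compose[OF this a_meas] show ?thesis by simp
qed

lemma snd_comp_meas[measurable]: "(\<lambda>\<omega>. snd \<omega> n) \<in> borel_measurable \<Omega>"
proof -
  have "(\<lambda>\<omega>::nat\<Rightarrow>real^'m. \<omega> n) \<in> measurable S \<mu>"
    by (rule measurable_component_singleton) simp
  then have "(\<lambda>\<omega>::nat\<Rightarrow>real^'m. \<omega> n) \<in> borel_measurable S"
    using measurable_cong_sets[OF refl noise_sets] by blast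
  then show ?thesis by (rule measurable_compose[OF measurable_snd])
qed

lemma fst_meas[measurable]: "(\<lambda>\<omega>. fst \<omega>) \<in> borel_measurable \<Omega>"
  using measurable_fst[of \<pi> S] measurable_cong_sets[OF refl pi_sets] by blast

lemma chain_meas[measurable]: "(\<lambda>\<omega>. chain a (fst \<omega>) (snd \<omega>) n) \<in> borel_measurable \<Omega>"
proof (induction n)
  case 0
  then show ?case using fst_meas by simp
next
  case (Suc n)
  show ?case using a_meas2[OF Suc snd_comp_meas[of n]] by simp
qed

definition Y :: "(real^'d) \<times> (nat \<Rightarrow> real^'m) \<Rightarrow> nat \<Rightarrow> ((real^'d) \<times> (real^'m))" where
  "Y \<omega> = (\<lambda>n. (chain a (fst \<omega>) (snd \<omega>) n, snd \<omega> n))"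

lemma Y_meas[measurable]: "Y \<in> measurable \<Omega> (\<Pi>\<^sub>M i\<in>(UNIV::nat set). borel)"
proof -
  have "(\<lambda>\<omega> i. Y \<omega> i) \<in> measurable \<Omega> (\<Pi>\<^sub>M i\<in>(UNIV::nat set). borel)"
  proof (rule measurable_PiM_single')
    fix i :: nat
    have "(\<lambda>\<omega>. (chain a (fst \<omega>) (snd \<omega>) i, snd \<omega> i)) \<in> \<Omega> \<rightarrow>\<^sub>M borel \<Otimes>\<^sub>M borel"
      by (intro measurable_Pair chain_meas snd_comp_meas)
    then show "(\<lambda>\<omega>. Y \<omega> i) \<in> borel_measurable \<Omega>"
      by (simp add: borel_prod Y_def)
  next
    show "(\<lambda>\<omega> i. Y \<omega> i) \<in> space \<Omega> \<rightarrow> (\<Pi>\<^sub>E i\<in>UNIV. space borel)"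
      by simp
  qed
  then show ?thesis by simp
qed

definition "Q = distr \<Omega> (\<Pi>\<^sub>M i\<in>(UNIV::nat set). borel) Y"

definition \<sigma> :: "(real^'d) \<times> (nat \<Rightarrow> real^'m) \<Rightarrow> (real^'d) \<times> (nat \<Rightarrow> real^'m)" where
  "\<sigma> \<omega> = (a (fst \<omega>) (snd \<omega> 0), \<lambda>i. snd \<omega> (Suc i))"

lemma Y_\<sigma>: "Y (\<sigma> \<omega>) = (\<lambda>n. Y \<omega> (Suc n))"
  unfolding Y_def \<sigma>_def by (rule ext) (simp only: chain_Suc_shift fst_conv snd_conv)


lemma shiftS_meas: "(\<lambda>ns i. ns (Suc i)) \<in> S \<rightarrow>\<^sub>M S"
proof (rule measurable_PiM_single')
  fix i :: nat
  show "(\<lambda>ns. ns (Suc i)) \<in> S \<rightarrow>\<^sub>M \<mu>"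
    by (rule measurable_component_singleton) simp
qed (auto simp: space_PiM PiE_iff)

lemma \<sigma>_meas: "\<sigma> \<in> \<Omega> \<rightarrow>\<^sub>M \<Omega>"
proof -
  have 1: "(\<lambda>\<omega>. a (fst \<omega>) (snd \<omega> 0)) \<in> \<Omega> \<rightarrow>\<^sub>M \<pi>"
    using a_meas2[OF fst_meas snd_comp_meas[of 0]] measurable_cong_sets[OF refl pi_sets] by blast
  have 2: "(\<lambda>\<omega>. (\<lambda>i. snd \<omega> (Suc i))) \<in> \<Omega> \<rightarrow>\<^sub>M S"
    using measurable_compose[OF measurable_snd[of \<pi> S] shiftS_meas] by simp
  show ?thesis unfolding \<sigma>_def using measurable_Pair[OF 1 2] by simp
qed

lemma S_split:
  assumes C: "C \<in> sets \<mu>" and B: "B \<in> sets S"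
  shows "emeasure S {ns \<in> space S. ns 0 \<in> C \<and> (\<lambda>i. ns (Suc i)) \<in> B} = emeasure \<mu> C * emeasure S B"
proof -
  interpret pS: prob_space S by (rule S_prob)
  let ?f = "\<lambda>(s, \<omega>). case_nat s \<omega> :: nat \<Rightarrow> real^'m"
  have fm: "?f \<in> \<mu> \<Otimes>\<^sub>M S \<rightarrow>\<^sub>M S"
  proof -
    have "(\<lambda>x. case_nat (fst x) (snd x)) \<in> \<mu> \<Otimes>\<^sub>M S \<rightarrow>\<^sub>M S"
      by (rule measurable_case_nat') (rule measurable_fst, rule measurable_snd)
    then show ?thesis by (simp add: case_prod_beta')
  qed
  have X: "{ns \<in> space S. ns 0 \<in> C \<and> (\<lambda>i. ns (Suc i)) \<in> B} \<in> sets S"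
  proof -
    have "(\<lambda>ns. (ns 0, (\<lambda>i. ns (Suc i)))) \<in> S \<rightarrow>\<^sub>M \<mu> \<Otimes>\<^sub>M S"
      by (intro measurable_Pair shiftS_meas measurable_component_singleton) simp
    from measurable_sets[OF this pair_measureI[OF C B]] show ?thesis
      by (simp add: vimage_def Int_def conj_commute)
  qed
  have "emeasure S {ns \<in> space S. ns 0 \<in> C \<and> (\<lambda>i. ns (Suc i)) \<in> B}
      = emeasure (distr (\<mu> \<Otimes>\<^sub>M S) S ?f) {ns \<in> space S. ns 0 \<in> C \<and> (\<lambda>i. ns (Suc i)) \<in> B}"
    by (simp only: sequence_space.PiM_iter[OF seq])
  also have "\<dots> = emeasure (\<mu> \<Otimes>\<^sub>M S) (?f -` {ns \<in> space S. ns 0 \<in> C \<and> (\<lambda>i. ns (Suc i)) \<in> B} \<inter> space (\<mu> \<Otimes>\<^sub>M S))"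
    by (rule emeasure_distr[OF fm X])
  also have "?f -` {ns \<in> space S. ns 0 \<in> C \<and> (\<lambda>i. ns (Suc i)) \<in> B} \<inter> space (\<mu> \<Otimes>\<^sub>M S) = C \<times> B"
    by (auto simp: space_pair_measure)
  also have "emeasure (\<mu> \<Otimes>\<^sub>M S) (C \<times> B) = emeasure \<mu> C * emeasure S B"
    by (rule pS.emeasure_pair_measure_Times[OF C B])
  finally show ?thesis .
qed

lemma \<sigma>_inv: "distr \<Omega> \<Omega> \<sigma> = \<Omega>"
proof -
  interpret pS: prob_space S by (rule S_prob)
  interpret pP: prob_space \<pi> by (rule pi_prob)
  have "\<Omega> = distr \<Omega> \<Omega> \<sigma>"
  proof (rule pair_measure_eqI)
    show "sigma_finite_measure \<pi>" "sigma_finite_measure S"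
      by (simp_all add: pP.sigma_finite_measure_axioms pS.sigma_finite_measure_axioms)
    show "sets \<Omega> = sets (distr \<Omega> \<Omega> \<sigma>)" by simp
  next
    fix A B assume A: "A \<in> sets \<pi>" and B: "B \<in> sets S"
    have AB: "A \<times> B \<in> sets \<Omega>" using A B by simp
    have pre: "\<sigma> -` (A \<times> B) \<inter> space \<Omega> \<in> sets \<Omega>"
      using measurable_sets[OF \<sigma>_meas AB] .
    have Cx: "{n \<in> space \<mu>. a x n \<in> A} \<in> sets \<mu>" for x
    proof -
      have "(\<lambda>n. a x n) \<in> borel_measurable borel"
        using a_meas2[OF measurable_const measurable_ident] by simp
      then have "(\<lambda>n. a x n) \<in> \<mu> \<rightarrow>\<^sub>M \<pi>"
        using measurable_cong_sets[OF noise_sets pi_sets] by blast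
      from measurable_sets[OF this A] show ?thesis by (simp add: vimage_def Int_def conj_commute)
    qed
    have "emeasure (distr \<Omega> \<Omega> \<sigma>) (A \<times> B) = emeasure \<Omega> (\<sigma> -` (A \<times> B) \<inter> space \<Omega>)"
      by (rule emeasure_distr[OF \<sigma>_meas AB])
    also have "\<dots> = (\<integral>\<^sup>+x. emeasure S (Pair x -` (\<sigma> -` (A \<times> B) \<inter> space \<Omega>)) \<partial>\<pi>)"
      by (rule pS.emeasure_pair_measure_alt[OF pre])
    also have "\<dots> = (\<integral>\<^sup>+x. emeasure \<mu> {n \<in> space \<mu>. a x n \<in> A} * emeasure S B \<partial>\<pi>)"
    proof (rule nn_integral_cong)
      fix x assume x: "x \<in> space \<pi>"
      have "Pair x -` (\<sigma> -` (A \<times> B) \<inter> space \<Omega>) =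
          {ns \<in> space S. ns 0 \<in> {n \<in> space \<mu>. a x n \<in> A} \<and> (\<lambda>i. ns (Suc i)) \<in> B}"
        using x by (auto simp: \<sigma>_def space_pair_measure space_PiM PiE_iff)
      then show "emeasure S (Pair x -` (\<sigma> -` (A \<times> B) \<inter> space \<Omega>)) =
          emeasure \<mu> {n \<in> space \<mu>. a x n \<in> A} * emeasure S B"
        using S_split[OF Cx B] by simp
    qed
    also have "\<dots> = (\<integral>\<^sup>+x. emeasure \<mu> {n \<in> space \<mu>. a x n \<in> A} \<partial>\<pi>) * emeasure S B"
    proof (rule nn_integral_multc)
      interpret pm: prob_space \<mu> by (rule noise_prob)
      have "(\<lambda>p. a (fst p) (snd p)) \<in> \<pi> \<Otimes>\<^sub>M \<mu> \<rightarrow>\<^sub>M \<pi>"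
      proof -
        have f1: "fst \<in> borel_measurable (\<pi> \<Otimes>\<^sub>M \<mu>)"
          using measurable_fst[of \<pi> \<mu>] measurable_cong_sets[OF refl pi_sets] by blast
        have f2: "snd \<in> borel_measurable (\<pi> \<Otimes>\<^sub>M \<mu>)"
          using measurable_snd[of \<pi> \<mu>] measurable_cong_sets[OF refl noise_sets] by blast
        show ?thesis using a_meas2[OF f1 f2] measurable_cong_sets[OF refl pi_sets] by blast
      qed
      from measurable_sets[OF this A]
      have Q: "{p. a (fst p) (snd p) \<in> A} \<in> sets (\<pi> \<Otimes>\<^sub>M \<mu>)"
        by (simp add: vimage_def space_pair_measure)
      from pm.measurable_emeasure_Pair[OF Q]
      show "(\<lambda>x. emeasure \<mu> {n \<in> space \<mu>. a x n \<in> A}) \<in> borel_measurable \<pi>"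
        by (simp add: vimage_def)
    qed
    also have "(\<integral>\<^sup>+x. emeasure \<mu> {n \<in> space \<mu>. a x n \<in> A} \<partial>\<pi>) = emeasure \<pi> A"
      using pi_inv A pi_sets unfolding invariant_for_def by simp
    finally show "emeasure \<pi> A * emeasure S B = emeasure (distr \<Omega> \<Omega> \<sigma>) (A \<times> B)" by simp
  qed
  then show ?thesis by simp
qed

lemma Q_shift1: "distr Q (\<Pi>\<^sub>M i\<in>(UNIV::nat set). borel) (\<lambda>y n. y (Suc n)) = Q"
proof -
  have sh: "(\<lambda>y n. y (Suc n)) \<in> (\<Pi>\<^sub>M i\<in>(UNIV::nat set). (borel :: ((real^'d) \<times> (real^'m)) measure))
       \<rightarrow>\<^sub>M (\<Pi>\<^sub>M i\<in>(UNIV::nat set). borel)"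
    by (rule measurable_PiM_single') (auto intro: measurable_component_singleton)
  have "distr Q (\<Pi>\<^sub>M i\<in>(UNIV::nat set). borel) (\<lambda>y n. y (Suc n))
      = distr \<Omega> (\<Pi>\<^sub>M i\<in>(UNIV::nat set). borel) ((\<lambda>y n. y (Suc n)) \<circ> Y)"
    unfolding Q_def by (rule distr_distr[OF sh Y_meas])
  also have "(\<lambda>y n. y (Suc n)) \<circ> Y = Y \<circ> \<sigma>"
    by (auto simp: Y_\<sigma>)
  also have "distr \<Omega> (\<Pi>\<^sub>M i\<in>(UNIV::nat set). borel) (Y \<circ> \<sigma>) = distr (distr \<Omega> \<Omega> \<sigma>) (\<Pi>\<^sub>M i\<in>(UNIV::nat set). borel) Y"
    by (rule distr_distr[OF Y_meas \<sigma>_meas, symmetric])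
  also have "\<dots> = Q" by (simp only: \<sigma>_inv Q_def)
  finally show ?thesis .
qed


abbreviation "PB \<equiv> (\<Pi>\<^sub>M i\<in>(UNIV::nat set). (borel :: ((real^'d) \<times> (real^'m)) measure))"

lemma shN_meas: "(\<lambda>y n. y (n + k)) \<in> PB \<rightarrow>\<^sub>M PB"
  by (rule measurable_PiM_single') (auto intro: measurable_component_singleton)

lemma sets_Q[simp]: "sets Q = sets PB" by (simp add: Q_def)
lemma space_Q[simp]: "space Q = UNIV" by (simp add: Q_def space_PiM)

lemma Q_prob: "prob_space Q"
  unfolding Q_def by (rule prob_space.prob_space_distr[OF Om_prob Y_meas])

lemma Q_shift: "distr Q PB (\<lambda>y n. y (n + k)) = Q"
proof (induction k)
  case 0
  have "distr Q PB (\<lambda>y. y) = Q"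
    by (rule distr_id2) simp
  then show ?case by simp
next
  case (Suc k)
  have sh1: "(\<lambda>y n. y (Suc n)) \<in> PB \<rightarrow>\<^sub>M PB"
    by (rule measurable_PiM_single') (auto intro: measurable_component_singleton)
  have eqn: "(\<lambda>y n. y (n + Suc k)) = (\<lambda>y n. y (Suc n)) \<circ> (\<lambda>y n. y (n + k))"
    by (auto simp: fun_eq_iff)
  then have "distr Q PB (\<lambda>y n. y (n + Suc k)) = distr (distr Q PB (\<lambda>y n. y (n + k))) PB (\<lambda>y n. y (Suc n))"
  proof -
    have m1: "(\<lambda>y n. y (n + k)) \<in> Q \<rightarrow>\<^sub>M PB"
      using shN_meas[of k] measurable_cong_sets[OF sets_Q refl] by blast
    show ?thesis unfolding eqn by (rule distr_distr[OF sh1 m1, symmetric])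
  qed
  also have "\<dots> = Q" using Suc Q_shift1 by simp
  finally show ?case .
qed

definition P :: "int set \<Rightarrow> (int \<Rightarrow> (real^'d) \<times> (real^'m)) measure" where
  "P J = distr Q (\<Pi>\<^sub>M t\<in>J. borel) (\<lambda>y. \<lambda>t\<in>J. y (nat (t - Min J)))"

lemma mapJ_meas: "(\<lambda>y. \<lambda>t\<in>J. y (nat (t - b))) \<in> Q \<rightarrow>\<^sub>M (\<Pi>\<^sub>M t\<in>J. borel)"
  by (subst measurable_cong_sets[OF sets_Q refl]) (rule measurable_restrict, rule measurable_component_singleton, simp)

lemma P_base:
  assumes J: "finite J" and b: "\<And>t. t \<in> J \<Longrightarrow> b \<le> t"
  shows "P J = distr Q (\<Pi>\<^sub>M t\<in>J. borel) (\<lambda>y. \<lambda>t\<in>J. y (nat (t - b)))"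
proof (cases "J = {}")
  case True
  then show ?thesis by (simp add: P_def restrict_def)
next
  case False
  define d where "d = nat (Min J - b)"
  have Mb: "b \<le> Min J" using b J False by simp
  have eq: "(\<lambda>y. \<lambda>t\<in>J. y (nat (t - b))) = (\<lambda>y. \<lambda>t\<in>J. y (nat (t - Min J))) \<circ> (\<lambda>y n. y (n + d))"
  proof (intro ext)
    fix y t
    show "(\<lambda>t\<in>J. y (nat (t - b))) t = ((\<lambda>y. \<lambda>t\<in>J. y (nat (t - Min J))) \<circ> (\<lambda>y n. y (n + d))) y t"
    proof (cases "t \<in> J")
      case True
      then have "Min J \<le> t" using J by simp
      then have "nat (t - b) = nat (t - Min J) + d" using Mb by (simp add: d_def)
      then show ?thesis using True by simp
    qed simp
  qed
  have "distr Q (\<Pi>\<^sub>M t\<in>J. borel) (\<lambda>y. \<lambda>t\<in>J. y (nat (t - b)))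
      = distr (distr Q PB (\<lambda>y n. y (n + d))) (\<Pi>\<^sub>M t\<in>J. borel) (\<lambda>y. \<lambda>t\<in>J. y (nat (t - Min J)))"
  proof -
    have m1: "(\<lambda>y n. y (n + d)) \<in> Q \<rightarrow>\<^sub>M PB"
      using shN_meas[of d] measurable_cong_sets[OF sets_Q refl] by blast
    have m2: "(\<lambda>y. \<lambda>t\<in>J. y (nat (t - Min J))) \<in> PB \<rightarrow>\<^sub>M (\<Pi>\<^sub>M t\<in>J. borel)"
      using mapJ_meas measurable_cong_sets[OF sets_Q refl] by blast
    show ?thesis unfolding eq using distr_distr[OF m2 m1] by simp
  qed
  also have "\<dots> = P J" by (simp add: Q_shift P_def)
  finally show ?thesis by simp
qed

lemma P_proj: "projective_family (UNIV::int set) P (\<lambda>_. borel)"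
proof (rule projective_family.intro)
  fix J H :: "int set" assume JH: "J \<subseteq> H" "finite H" "H \<subseteq> UNIV"
  define b where "b = (if H = {} then 0 else Min H)"
  have bH: "\<And>t. t \<in> H \<Longrightarrow> b \<le> t" using JH by (auto simp: b_def)
  have fJ: "finite J" using JH finite_subset by blast
  have PH: "P H = distr Q (\<Pi>\<^sub>M t\<in>H. borel) (\<lambda>y. \<lambda>t\<in>H. y (nat (t - b)))"
    by (rule P_base[OF JH(2) bH])
  have "distr (P H) (\<Pi>\<^sub>M t\<in>J. borel) (\<lambda>f. restrict f J)
      = distr Q (\<Pi>\<^sub>M t\<in>J. borel) ((\<lambda>f. restrict f J) \<circ> (\<lambda>y. \<lambda>t\<in>H. y (nat (t - b))))"
    unfolding PH
    by (rule distr_distr[OF measurable_restrict_subset[OF JH(1)] mapJ_meas])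
  also have "(\<lambda>f. restrict f J) \<circ> (\<lambda>y. \<lambda>t\<in>H. y (nat (t - b))) = (\<lambda>y. \<lambda>t\<in>J. y (nat (t - b)))"
    using JH(1) by (auto simp: fun_eq_iff restrict_def)
  also have "distr Q (\<Pi>\<^sub>M t\<in>J. borel) \<dots> = P J"
  proof -
    have "\<And>t. t \<in> J \<Longrightarrow> b \<le> t" using bH JH(1) by auto
    from P_base[OF fJ this] show ?thesis by simp
  qed
  finally have "distr (P H) (\<Pi>\<^sub>M t\<in>J. borel) (\<lambda>f. restrict f J) = P J" .
  then show "P J = distr (P H) (\<Pi>\<^sub>M t\<in>J. borel) (\<lambda>f. restrict f J)" by (rule sym)
next
  show "prob_space (P J)" for J :: "int set"
    unfolding P_def by (rule prob_space.prob_space_distr[OF Q_prob mapJ_meas])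
qed


sublocale PP: polish_projective "UNIV::int set" P
  unfolding polish_projective_def by (rule P_proj)

abbreviation "PBI \<equiv> (\<Pi>\<^sub>M i\<in>(UNIV::int set). (borel :: ((real^'d) \<times> (real^'m)) measure))"

lemma space_lim[simp]: "space PP.lim = UNIV"
  by (simp add: space_PiM)

lemma space_PBI[simp]: "space PBI = UNIV"
  by (simp add: space_PiM)

lemma shI_meas: "(\<lambda>\<omega> n. \<omega> (s + int n)) \<in> PP.lim \<rightarrow>\<^sub>M PB"
proof -
  have "(\<lambda>\<omega> n. \<omega> (s + int n)) \<in> PBI \<rightarrow>\<^sub>M PB"
    by (rule measurable_PiM_single') (auto intro: measurable_component_singleton)
  then show ?thesis by (simp add: measurable_cong_sets[OF PP.sets_lim refl])
qed

lemma L_shift_nat: "distr PP.lim PB (\<lambda>\<omega> n. \<omega> (s + int n)) = Q"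
proof (rule measure_eqI_PiM_infinite)
  show "sets (distr PP.lim PB (\<lambda>\<omega> n. \<omega> (s + int n))) = sets PB" by simp
  show "sets Q = sets PB" by simp
  show "finite_measure (distr PP.lim PB (\<lambda>\<omega> n. \<omega> (s + int n)))"
    by (rule prob_space.finite_measure[OF prob_space.prob_space_distr[OF PP.P.prob_space_axioms shI_meas]])
next
  fix A :: "nat \<Rightarrow> ((real^'d) \<times> (real^'m)) set" and J :: "nat set"
  assume J: "finite J" "J \<subseteq> UNIV" and A: "\<And>i. i \<in> J \<Longrightarrow> A i \<in> sets borel"
  define J' where "J' = (\<lambda>n. s + int n) ` J"
  define A' where "A' = (\<lambda>t. A (nat (t - s)))"
  have fJ': "finite J'" using J by (simp add: J'_def)
  have A'_sets: "PiE J' A' \<in> sets (\<Pi>\<^sub>M t\<in>J'. borel)"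
    by (rule sets_PiM_I_finite[OF fJ']) (auto simp: J'_def A'_def A)
  have X: "prod_emb UNIV (\<lambda>_. borel) J (PiE J A) \<in> sets PB"
    using J A by (intro sets_PiM_I) auto
  have "emeasure (distr PP.lim PB (\<lambda>\<omega> n. \<omega> (s + int n))) (prod_emb UNIV (\<lambda>_. borel) J (PiE J A))
      = emeasure PP.lim ((\<lambda>\<omega> n. \<omega> (s + int n)) -` prod_emb UNIV (\<lambda>_. borel) J (PiE J A) \<inter> space PP.lim)"
    by (rule emeasure_distr[OF shI_meas X])
  also have "(\<lambda>\<omega> n. \<omega> (s + int n)) -` prod_emb UNIV (\<lambda>_. borel) J (PiE J A) \<inter> space PP.lim
      = prod_emb UNIV (\<lambda>_. borel) J' (PiE J' A')"
    by (auto simp: prod_emb_def PiE_iff J'_def A'_def space_PiM)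
  also have "emeasure PP.lim (prod_emb UNIV (\<lambda>_. borel) J' (PiE J' A')) = emeasure (P J') (PiE J' A')"
    by (rule PP.emeasure_lim_emb[OF _ fJ' A'_sets]) simp
  also have "P J' = distr Q (\<Pi>\<^sub>M t\<in>J'. borel) (\<lambda>y. \<lambda>t\<in>J'. y (nat (t - s)))"
    by (rule P_base[OF fJ']) (auto simp: J'_def)
  also have "emeasure \<dots> (PiE J' A') = emeasure Q ((\<lambda>y. \<lambda>t\<in>J'. y (nat (t - s))) -` PiE J' A' \<inter> space Q)"
    by (rule emeasure_distr[OF mapJ_meas A'_sets])
  also have "(\<lambda>y. \<lambda>t\<in>J'. y (nat (t - s))) -` PiE J' A' \<inter> space Q = prod_emb UNIV (\<lambda>_. borel) J (PiE J A)"
    by (auto simp: prod_emb_def PiE_iff J'_def A'_def space_PiM)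
  finally show "emeasure (distr PP.lim PB (\<lambda>\<omega> n. \<omega> (s + int n))) (prod_emb UNIV (\<lambda>_. borel) J (PiE J A))
      = emeasure Q (prod_emb UNIV (\<lambda>_. borel) J (PiE J A))" .
qed


lemma L_em:
  assumes C: "C \<in> sets PB"
  shows "emeasure PP.lim {\<omega>. (\<lambda>n. \<omega> (s + int n)) \<in> C} = emeasure \<Omega> (Y -` C \<inter> space \<Omega>)"
proof -
  have "emeasure PP.lim {\<omega>. (\<lambda>n. \<omega> (s + int n)) \<in> C} = emeasure (distr PP.lim PB (\<lambda>\<omega> n. \<omega> (s + int n))) C"
    by (subst emeasure_distr[OF shI_meas C]) (simp add: vimage_def)
  also have "\<dots> = emeasure Q C" by (simp only: L_shift_nat)
  also have "\<dots> = emeasure \<Omega> (Y -` C \<inter> space \<Omega>)"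
    unfolding Q_def by (rule emeasure_distr[OF Y_meas C])
  finally show ?thesis .
qed

lemma L_meas:
  assumes C: "C \<in> sets PB"
  shows "measure PP.lim {\<omega>. (\<lambda>n. \<omega> (s + int n)) \<in> C} = measure \<Omega> (Y -` C \<inter> space \<Omega>)"
  using L_em[OF C] by (simp add: measure_def)

lemma L_AE:
  assumes "AE y in Q. R y"
  shows "AE \<omega> in PP.lim. R (\<lambda>n. \<omega> (s + int n))"
proof -
  have "AE y in distr PP.lim PB (\<lambda>\<omega> n. \<omega> (s + int n)). R y" using assms by (simp only: L_shift_nat)
  from AE_distrD[OF shI_meas this] show ?thesis .
qed

lemma Om_times:
  assumes A: "A \<in> sets \<pi>" and B: "B \<in> sets S"
  shows "emeasure \<Omega> (A \<times> B) = emeasure \<pi> A * emeasure S B"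
proof -
  interpret pS: prob_space S by (rule S_prob)
  show ?thesis by (rule pS.emeasure_pair_measure_Times[OF A B])
qed

definition Xc :: "int \<Rightarrow> (int \<Rightarrow> (real^'d) \<times> (real^'m)) \<Rightarrow> real^'d" where
  "Xc t \<omega> = fst (\<omega> t)"
definition Nc :: "int \<Rightarrow> (int \<Rightarrow> (real^'d) \<times> (real^'m)) \<Rightarrow> real^'m" where
  "Nc t \<omega> = snd (\<omega> (t - 1))"

lemma comp_meas: "(\<lambda>\<omega>. \<omega> t) \<in> borel_measurable PP.lim"
proof -
  have "(\<lambda>\<omega>. \<omega> t) \<in> PBI \<rightarrow>\<^sub>M borel" by (rule measurable_component_singleton) simp
  then show ?thesis by (subst measurable_cong_sets[OF PP.sets_lim refl])
qed

lemma fst_b[measurable]: "fst \<in> borel_measurable (borel :: ((real^'d) \<times> (real^'m)) measure)"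
  using measurable_fst[of "borel :: (real^'d) measure" "borel :: (real^'m) measure"] by (simp add: borel_prod)
lemma snd_b[measurable]: "snd \<in> borel_measurable (borel :: ((real^'d) \<times> (real^'m)) measure)"
  using measurable_snd[of "borel :: (real^'d) measure" "borel :: (real^'m) measure"] by (simp add: borel_prod)

lemma Xc_meas: "Xc t \<in> borel_measurable PP.lim"
  unfolding Xc_def using measurable_compose[OF comp_meas fst_b] by simp
lemma Nc_meas: "Nc t \<in> borel_measurable PP.lim"
  unfolding Nc_def using measurable_compose[OF comp_meas snd_b] by simp

lemma distr_Xc: "distr PP.lim borel (Xc t) = \<pi>"
proof (rule measure_eqI)
  show "sets (distr PP.lim borel (Xc t)) = sets \<pi>" using pi_sets by simp
next
  fix A assume A: "A \<in> sets (distr PP.lim borel (Xc t))"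
  then have Ab: "A \<in> sets borel" by simp
  define C where "C = {y :: nat \<Rightarrow> (real^'d) \<times> (real^'m). fst (y 0) \<in> A}"
  have C: "C \<in> sets PB"
  proof -
    have "(\<lambda>y::nat \<Rightarrow> (real^'d) \<times> (real^'m). fst (y 0)) \<in> borel_measurable PB"
      using measurable_compose[OF measurable_component_singleton[of 0 UNIV "\<lambda>_. borel"] fst_b] by simp
    from measurable_sets[OF this Ab] show ?thesis by (simp add: C_def vimage_def space_PiM)
  qed
  have "emeasure (distr PP.lim borel (Xc t)) A = emeasure PP.lim {\<omega>. (\<lambda>n. \<omega> (t + int n)) \<in> C}"
    by (subst emeasure_distr[OF Xc_meas Ab]) (simp add: C_def Xc_def vimage_def)
  also have "\<dots> = emeasure \<Omega> (Y -` C \<inter> space \<Omega>)" by (rule L_em[OF C])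
  also have "Y -` C \<inter> space \<Omega> = A \<times> UNIV"
    by (auto simp: Y_def C_def space_pair_measure)
  also have "emeasure \<Omega> (A \<times> UNIV) = emeasure \<pi> A"
    using Om_times[of A UNIV] Ab pi_sets prob_space.emeasure_space_1[OF S_prob]
    by (metis mult.right_neutral sets.top space_S)
  finally show "emeasure (distr PP.lim borel (Xc t)) A = emeasure \<pi> A" .
qed

lemma distr_Nc: "distr PP.lim borel (Nc t) = \<mu>"
proof (rule measure_eqI)
  show "sets (distr PP.lim borel (Nc t)) = sets \<mu>" using noise_sets by simp
next
  fix A assume A: "A \<in> sets (distr PP.lim borel (Nc t))"
  then have Ab: "A \<in> sets borel" by simp
  define C where "C = {y :: nat \<Rightarrow> (real^'d) \<times> (real^'m). snd (y 0) \<in> A}"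
  have C: "C \<in> sets PB"
  proof -
    have "(\<lambda>y::nat \<Rightarrow> (real^'d) \<times> (real^'m). snd (y 0)) \<in> borel_measurable PB"
      using measurable_compose[OF measurable_component_singleton[of 0 UNIV "\<lambda>_. borel"] snd_b] by simp
    from measurable_sets[OF this Ab] show ?thesis by (simp add: C_def vimage_def space_PiM)
  qed
  have "emeasure (distr PP.lim borel (Nc t)) A = emeasure PP.lim {\<omega>. (\<lambda>n. \<omega> ((t - 1) + int n)) \<in> C}"
    by (subst emeasure_distr[OF Nc_meas Ab]) (simp add: C_def Nc_def vimage_def)
  also have "\<dots> = emeasure \<Omega> (Y -` C \<inter> space \<Omega>)" by (rule L_em[OF C])
  also have "Y -` C \<inter> space \<Omega> = UNIV \<times> {ns. ns 0 \<in> A}"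
    by (auto simp: Y_def C_def space_pair_measure)
  also have "emeasure \<Omega> (UNIV \<times> {ns. ns 0 \<in> A}) = emeasure S {ns. ns 0 \<in> A}"
  proof -
    have B: "{ns. ns 0 \<in> A} \<in> sets S"
    proof -
      have "A \<in> sets \<mu>" using Ab noise_sets by simp
      from measurable_sets[OF measurable_component_singleton[of 0 UNIV "\<lambda>_. \<mu>"] this]
      show ?thesis by (simp add: vimage_def space_PiM)
    qed
    show ?thesis using Om_times[OF _ B, of UNIV] prob_space.emeasure_space_1[OF pi_prob]
      by (metis mult_1 sets.top space_pi)
  qed
  also have "\<dots> = emeasure \<mu> A"
  proof -
    have "emeasure (distr S \<mu> (\<lambda>\<omega>. \<omega> 0)) A = emeasure \<mu> A"
      using distr_PiM_component[of "UNIV::nat set" "\<lambda>_. \<mu>" 0] noise_prob by simp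
    then show ?thesis
      using Ab noise_sets by (subst (asm) emeasure_distr) (auto simp: vimage_def)
  qed
  finally show "emeasure (distr PP.lim borel (Nc t)) A = emeasure \<mu> A" .
qed


lemma comp_PB: "(\<lambda>y::nat \<Rightarrow> (real^'d) \<times> (real^'m). y n) \<in> borel_measurable PB"
  by (rule measurable_component_singleton) simp

lemma AE_rec: "AE \<omega> in PP.lim. \<forall>t. Xc (t + 1) \<omega> = a (Xc t \<omega>) (Nc (t + 1) \<omega>)"
proof (rule AE_all_countable[THEN iffD2], rule allI)
  fix t :: int
  define R where "R = (\<lambda>y::nat \<Rightarrow> (real^'d) \<times> (real^'m). fst (y 1) = a (fst (y 0)) (snd (y 0)))"
  have f1: "(\<lambda>y::nat \<Rightarrow> (real^'d) \<times> (real^'m). fst (y 1)) \<in> borel_measurable PB"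
    using measurable_compose[OF comp_PB fst_b] by simp
  have f2: "(\<lambda>y::nat \<Rightarrow> (real^'d) \<times> (real^'m). a (fst (y 0)) (snd (y 0))) \<in> borel_measurable PB"
    using a_meas2[OF measurable_compose[OF comp_PB fst_b] measurable_compose[OF comp_PB snd_b]] by simp
  have "{y \<in> space PB. R y} = (\<lambda>y. fst (y 1) - a (fst (y 0)) (snd (y 0))) -` {0} \<inter> space PB"
    by (auto simp: R_def)
  also have "\<dots> \<in> sets PB"
    by (rule measurable_sets[OF borel_measurable_diff[OF f1 f2]]) simp
  finally have Rm: "{y \<in> space PB. R y} \<in> sets PB" .
  have "AE y in Q. R y"
    unfolding Q_def
    by (subst AE_distr_iff[OF Y_meas Rm]) (auto simp: R_def Y_def)
  from L_AE[OF this, of t]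
  show "AE \<omega> in PP.lim. Xc (t + 1) \<omega> = a (Xc t \<omega>) (Nc (t + 1) \<omega>)"
    by (simp add: R_def Xc_def Nc_def add.commute)
qed

lemma sets_S_borel: "sets S = sets (\<Pi>\<^sub>M s\<in>(UNIV::nat set). (borel :: (real^'m) measure))"
  by (rule sets_PiM_cong) (simp_all add: noise_sets)

lemma Om_times_measure:
  assumes A: "A \<in> sets \<pi>" and B: "B \<in> sets S"
  shows "measure \<Omega> (A \<times> B) = measure \<pi> A * measure S B"
  using Om_times[OF A B] by (simp add: measure_def enn2real_mult)

lemma indep_future:
  assumes A: "A \<in> sets borel" and B: "B \<in> sets (\<Pi>\<^sub>M s\<in>(UNIV::nat set). (borel :: (real^'m) measure))"
  shows "measure PP.lim {\<omega>\<in>space PP.lim. Xc t \<omega> \<in> A \<and> (\<lambda>s. Nc (t + 1 + int s) \<omega>) \<in> B}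
       = measure PP.lim {\<omega>\<in>space PP.lim. Xc t \<omega> \<in> A} *
         measure PP.lim {\<omega>\<in>space PP.lim. (\<lambda>s. Nc (t + 1 + int s) \<omega>) \<in> B}"
proof -
  have Api: "A \<in> sets \<pi>" using A pi_sets by simp
  have BS: "B \<in> sets S" using B sets_S_borel by simp
  have g: "(\<lambda>y::nat \<Rightarrow> (real^'d) \<times> (real^'m). (\<lambda>n. snd (y n))) \<in> PB \<rightarrow>\<^sub>M (\<Pi>\<^sub>M s\<in>(UNIV::nat set). (borel :: (real^'m) measure))"
    by (rule measurable_PiM_single') (auto intro: measurable_compose[OF comp_PB snd_b])
  have h: "(\<lambda>y::nat \<Rightarrow> (real^'d) \<times> (real^'m). fst (y 0)) \<in> borel_measurable PB"
    using measurable_compose[OF comp_PB fst_b] by simp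
  have gB: "{y. (\<lambda>n. snd (y n)) \<in> B} \<in> sets PB"
    using measurable_sets[OF g B] by (simp add: vimage_def space_PiM)
  have hA: "{y. fst (y 0) \<in> A} \<in> sets PB"
    using measurable_sets[OF h A] by (simp add: vimage_def space_PiM)
  have e1: "{\<omega>\<in>space PP.lim. Xc t \<omega> \<in> A \<and> (\<lambda>s. Nc (t + 1 + int s) \<omega>) \<in> B}
      = {\<omega>. (\<lambda>n. \<omega> (t + int n)) \<in> {y. fst (y 0) \<in> A} \<inter> {y. (\<lambda>n. snd (y n)) \<in> B}}"
    by (simp add: Xc_def Nc_def)
  have e2: "{\<omega>\<in>space PP.lim. Xc t \<omega> \<in> A} = {\<omega>. (\<lambda>n. \<omega> (t + int n)) \<in> {y. fst (y 0) \<in> A}}"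
    by (simp add: Xc_def)
  have e3: "{\<omega>\<in>space PP.lim. (\<lambda>s. Nc (t + 1 + int s) \<omega>) \<in> B}
      = {\<omega>. (\<lambda>n. \<omega> (t + int n)) \<in> {y. (\<lambda>n. snd (y n)) \<in> B}}"
    by (simp add: Nc_def)
  have y1: "Y -` ({y. fst (y 0) \<in> A} \<inter> {y. (\<lambda>n. snd (y n)) \<in> B}) \<inter> space \<Omega> = A \<times> B"
    by (auto simp: Y_def space_pair_measure)
  have y2: "Y -` {y. fst (y 0) \<in> A} \<inter> space \<Omega> = A \<times> UNIV"
    by (auto simp: Y_def space_pair_measure)
  have y3: "Y -` {y. (\<lambda>n. snd (y n)) \<in> B} \<inter> space \<Omega> = UNIV \<times> B"
    by (auto simp: Y_def space_pair_measure)
  have "measure PP.lim {\<omega>\<in>space PP.lim. Xc t \<omega> \<in> A \<and> (\<lambda>s. Nc (t + 1 + int s) \<omega>) \<in> B}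
      = measure \<pi> A * measure S B"
    unfolding e1 L_meas[OF sets.Int[OF hA gB]] y1 by (rule Om_times_measure[OF Api BS])
  moreover have "measure PP.lim {\<omega>\<in>space PP.lim. Xc t \<omega> \<in> A} = measure \<pi> A"
    unfolding e2 L_meas[OF hA] y2
    using Om_times_measure[OF Api, of UNIV] prob_space.prob_space[OF S_prob] sets.top[of S] by simp
  moreover have "measure PP.lim {\<omega>\<in>space PP.lim. (\<lambda>s. Nc (t + 1 + int s) \<omega>) \<in> B} = measure S B"
    unfolding e3 L_meas[OF gB] y3
    using Om_times_measure[OF _ BS, of UNIV] prob_space.prob_space[OF pi_prob] sets.top[of \<pi>] by simp
  ultimately show ?thesis by simp
qed

lemma L_shift_int: "distr PP.lim PBI (\<lambda>\<omega> t. \<omega> (t + k)) = PP.lim"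
proof (rule measure_eqI_PiM_infinite)
  show "sets (distr PP.lim PBI (\<lambda>\<omega> t. \<omega> (t + k))) = sets PBI" by simp
  show "sets PP.lim = sets PBI" by simp
  have m: "(\<lambda>\<omega> t. \<omega> (t + k)) \<in> PP.lim \<rightarrow>\<^sub>M PBI"
  proof -
    have "(\<lambda>\<omega> t. \<omega> (t + k)) \<in> PBI \<rightarrow>\<^sub>M PBI"
      by (rule measurable_PiM_single') (auto intro: measurable_component_singleton)
    then show ?thesis by (subst measurable_cong_sets[OF PP.sets_lim refl])
  qed
  show "finite_measure (distr PP.lim PBI (\<lambda>\<omega> t. \<omega> (t + k)))"
    by (rule prob_space.finite_measure[OF prob_space.prob_space_distr[OF PP.P.prob_space_axioms m]])
next
  fix A :: "int \<Rightarrow> ((real^'d) \<times> (real^'m)) set" and J :: "int set"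
  assume J: "finite J" "J \<subseteq> UNIV" and A: "\<And>i. i \<in> J \<Longrightarrow> A i \<in> sets borel"
  have m: "(\<lambda>\<omega> t. \<omega> (t + k)) \<in> PP.lim \<rightarrow>\<^sub>M PBI"
  proof -
    have "(\<lambda>\<omega> t. \<omega> (t + k)) \<in> PBI \<rightarrow>\<^sub>M PBI"
      by (rule measurable_PiM_single') (auto intro: measurable_component_singleton)
    then show ?thesis by (subst measurable_cong_sets[OF PP.sets_lim refl])
  qed
  define J' where "J' = (\<lambda>t. t + k) ` J"
  define A' where "A' = (\<lambda>t. A (t - k))"
  define b where "b = (if J = {} then 0 else Min J)"
  have bJ: "\<And>t. t \<in> J \<Longrightarrow> b \<le> t" using J by (auto simp: b_def)
  have bJ': "\<And>t. t \<in> J' \<Longrightarrow> b + k \<le> t" using bJ by (auto simp: J'_def)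
  have fJ': "finite J'" using J by (simp add: J'_def)
  have A'_sets: "PiE J' A' \<in> sets (\<Pi>\<^sub>M t\<in>J'. borel)"
    by (rule sets_PiM_I_finite[OF fJ']) (auto simp: J'_def A'_def A)
  have A_sets: "PiE J A \<in> sets (\<Pi>\<^sub>M t\<in>J. borel)"
    by (rule sets_PiM_I_finite[OF J(1)]) (auto simp: A)
  have X: "prod_emb UNIV (\<lambda>_. borel) J (PiE J A) \<in> sets PBI"
    using J A by (intro sets_PiM_I) auto
  have "emeasure (distr PP.lim PBI (\<lambda>\<omega> t. \<omega> (t + k))) (prod_emb UNIV (\<lambda>_. borel) J (PiE J A))
      = emeasure PP.lim ((\<lambda>\<omega> t. \<omega> (t + k)) -` prod_emb UNIV (\<lambda>_. borel) J (PiE J A) \<inter> space PP.lim)"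
    by (rule emeasure_distr[OF m X])
  also have "(\<lambda>\<omega> t. \<omega> (t + k)) -` prod_emb UNIV (\<lambda>_. borel) J (PiE J A) \<inter> space PP.lim
      = prod_emb UNIV (\<lambda>_. borel) J' (PiE J' A')"
    by (auto simp: prod_emb_def PiE_iff J'_def A'_def space_PiM)
  also have "emeasure PP.lim (prod_emb UNIV (\<lambda>_. borel) J' (PiE J' A')) = emeasure (P J') (PiE J' A')"
    by (rule PP.emeasure_lim_emb[OF _ fJ' A'_sets]) simp
  also have "P J' = distr Q (\<Pi>\<^sub>M t\<in>J'. borel) (\<lambda>y. \<lambda>t\<in>J'. y (nat (t - (b + k))))"
    by (rule P_base[OF fJ' bJ'])
  also have "emeasure \<dots> (PiE J' A') = emeasure Q ((\<lambda>y. \<lambda>t\<in>J'. y (nat (t - (b + k)))) -` PiE J' A' \<inter> space Q)"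
    by (rule emeasure_distr[OF mapJ_meas A'_sets])
  also have "(\<lambda>y. \<lambda>t\<in>J'. y (nat (t - (b + k)))) -` PiE J' A' \<inter> space Q
      = (\<lambda>y. \<lambda>t\<in>J. y (nat (t - b))) -` PiE J A \<inter> space Q"
    by (auto simp: PiE_iff J'_def A'_def)
  also have "emeasure Q \<dots> = emeasure (distr Q (\<Pi>\<^sub>M t\<in>J. borel) (\<lambda>y. \<lambda>t\<in>J. y (nat (t - b)))) (PiE J A)"
    by (rule emeasure_distr[OF mapJ_meas A_sets, symmetric])
  also have "distr Q (\<Pi>\<^sub>M t\<in>J. borel) (\<lambda>y. \<lambda>t\<in>J. y (nat (t - b))) = P J"
    by (rule P_base[OF J(1) bJ, symmetric])
  also have "emeasure (P J) (PiE J A) = emeasure PP.lim (prod_emb UNIV (\<lambda>_. borel) J (PiE J A))"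
    by (rule PP.emeasure_lim_emb[OF _ J(1) A_sets, symmetric]) simp
  finally show "emeasure (distr PP.lim PBI (\<lambda>\<omega> t. \<omega> (t + k))) (prod_emb UNIV (\<lambda>_. borel) J (PiE J A))
      = emeasure PP.lim (prod_emb UNIV (\<lambda>_. borel) J (PiE J A))" .
qed


lemma indep_N: "prob_space.indep_vars PP.lim (\<lambda>_. borel) Nc UNIV"
proof -
  have Nm: "\<And>i. Nc i \<in> PP.lim \<rightarrow>\<^sub>M borel" by (rule Nc_meas)
  have rhs: "(\<Pi>\<^sub>M i\<in>(UNIV::int set). distr PP.lim borel (Nc i)) = (\<Pi>\<^sub>M i\<in>(UNIV::int set). \<mu>)"
    by (simp add: distr_Nc)
  have mm: "(\<lambda>x. \<lambda>i\<in>(UNIV::int set). Nc i x) \<in> PP.lim \<rightarrow>\<^sub>M (\<Pi>\<^sub>M i\<in>(UNIV::int set). borel)"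
    by (rule measurable_restrict) (rule Nm)
  have lhs: "distr PP.lim (\<Pi>\<^sub>M i\<in>(UNIV::int set). borel) (\<lambda>x. \<lambda>i\<in>UNIV. Nc i x) = (\<Pi>\<^sub>M i\<in>(UNIV::int set). \<mu>)"
  proof (rule measure_eqI_PiM_infinite)
    show "sets (distr PP.lim (\<Pi>\<^sub>M i\<in>(UNIV::int set). borel) (\<lambda>x. \<lambda>i\<in>UNIV. Nc i x)) = sets (\<Pi>\<^sub>M i\<in>(UNIV::int set). \<mu>)"
      by (simp, rule sets_PiM_cong) (simp_all add: noise_sets)
    show "sets (\<Pi>\<^sub>M i\<in>(UNIV::int set). \<mu>) = sets (\<Pi>\<^sub>M i\<in>(UNIV::int set). \<mu>)" ..
    show "finite_measure (distr PP.lim (\<Pi>\<^sub>M i\<in>(UNIV::int set). borel) (\<lambda>x. \<lambda>i\<in>UNIV. Nc i x))"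
      by (rule prob_space.finite_measure[OF prob_space.prob_space_distr[OF PP.P.prob_space_axioms mm]])
  next
    fix A :: "int \<Rightarrow> (real^'m) set" and J :: "int set"
    assume J: "finite J" "J \<subseteq> UNIV" and A: "\<And>i. i \<in> J \<Longrightarrow> A i \<in> sets \<mu>"
    define s where "s = (if J = {} then 0 else Min J - 1)"
    have sJ: "\<And>j. j \<in> J \<Longrightarrow> s \<le> j - 1" using Min_le[OF J(1)] by (auto simp: s_def) fastforce
    define C where "C = {y :: nat \<Rightarrow> (real^'d) \<times> (real^'m). \<forall>j\<in>J. snd (y (nat (j - 1 - s))) \<in> A j}"
    define J0 where "J0 = (\<lambda>j. nat (j - 1 - s)) ` J"
    define A0 where "A0 = (\<lambda>n::nat. A (s + 1 + int n))"
    have inj: "inj_on (\<lambda>j. nat (j - 1 - s)) J"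
      using sJ by (auto simp: inj_on_def) (smt (verit) nat_eq_iff2)
    have fJ0: "finite J0" using J by (simp add: J0_def)
    have A0s: "\<And>n. n \<in> J0 \<Longrightarrow> A0 n \<in> sets \<mu>"
      using A sJ by (auto simp: J0_def A0_def)
    have Xs: "prod_emb UNIV (\<lambda>_. \<mu>) J (PiE J A) \<in> sets (\<Pi>\<^sub>M i\<in>(UNIV::int set). borel)"
    proof -
      have "prod_emb UNIV (\<lambda>_. \<mu>) J (PiE J A) \<in> sets (\<Pi>\<^sub>M i\<in>(UNIV::int set). \<mu>)"
        using J A by (intro sets_PiM_I) auto
      moreover have "sets (\<Pi>\<^sub>M i\<in>(UNIV::int set). \<mu>) = sets (\<Pi>\<^sub>M i\<in>(UNIV::int set). (borel :: (real^'m) measure))"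
        by (rule sets_PiM_cong) (simp_all add: noise_sets)
      ultimately show ?thesis by simp
    qed
    have C: "C \<in> sets PB"
    proof -
      have "C = (\<Inter>j\<in>J. {y. snd (y (nat (j - 1 - s))) \<in> A j})" by (auto simp: C_def)
      also have "\<dots> \<in> sets PB"
      proof (cases "J = {}")
        case True then show ?thesis using sets.top[of PB] by (simp add: space_PiM)
      next
        case False
        show ?thesis
        proof (rule sets.finite_INT[OF J(1) False])
          fix j assume "j \<in> J"
          have Ab: "A j \<in> sets borel" using A[OF \<open>j \<in> J\<close>] noise_sets by simp
          from measurable_sets[OF measurable_compose[OF comp_PB snd_b] Ab]
          show "{y. snd (y (nat (j - 1 - s))) \<in> A j} \<in> sets PB" by (simp add: vimage_def space_PiM)
        qed
      qed
      finally show ?thesis .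
    qed
    have "emeasure (distr PP.lim (\<Pi>\<^sub>M i\<in>(UNIV::int set). borel) (\<lambda>x. \<lambda>i\<in>UNIV. Nc i x)) (prod_emb UNIV (\<lambda>_. \<mu>) J (PiE J A))
        = emeasure PP.lim ((\<lambda>x. \<lambda>i\<in>UNIV. Nc i x) -` prod_emb UNIV (\<lambda>_. \<mu>) J (PiE J A) \<inter> space PP.lim)"
      by (rule emeasure_distr[OF mm Xs])
    also have "(\<lambda>x. \<lambda>i\<in>UNIV. Nc i x) -` prod_emb UNIV (\<lambda>_. \<mu>) J (PiE J A) \<inter> space PP.lim
        = {\<omega>. (\<lambda>n. \<omega> (s + int n)) \<in> C}"
    proof -
      have "\<And>j. j \<in> J \<Longrightarrow> s + int (nat (j - 1 - s)) = j - 1" using sJ by simp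
      then show ?thesis by (auto simp: prod_emb_def PiE_iff C_def Nc_def space_PiM)
    qed
    also have "emeasure PP.lim \<dots> = emeasure \<Omega> (Y -` C \<inter> space \<Omega>)" by (rule L_em[OF C])
    also have "Y -` C \<inter> space \<Omega> = UNIV \<times> prod_emb UNIV (\<lambda>_. \<mu>) J0 (PiE J0 A0)"
    proof -
      have "\<And>j. j \<in> J \<Longrightarrow> s + 1 + int (nat (j - 1 - s)) = j" using sJ by simp
      then show ?thesis
        by (auto simp: Y_def C_def space_pair_measure prod_emb_def PiE_iff J0_def A0_def space_PiM)
    qed
    also have "emeasure \<Omega> (UNIV \<times> prod_emb UNIV (\<lambda>_. \<mu>) J0 (PiE J0 A0)) = emeasure S (prod_emb UNIV (\<lambda>_. \<mu>) J0 (PiE J0 A0))"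
    proof -
      have B: "prod_emb UNIV (\<lambda>_. \<mu>) J0 (PiE J0 A0) \<in> sets S"
        using fJ0 A0s by (intro sets_PiM_I) auto
      show ?thesis using Om_times[OF _ B, of UNIV] prob_space.emeasure_space_1[OF pi_prob] sets.top[of \<pi>]
        by simp
    qed
    also have "\<dots> = (\<Prod>n\<in>J0. emeasure \<mu> (A0 n))"
      by (rule emeasure_PiM_emb[OF noise_prob _ fJ0 A0s]) auto
    also have "\<dots> = (\<Prod>j\<in>J. emeasure \<mu> (A j))"
    proof -
      have "(\<Prod>n\<in>J0. emeasure \<mu> (A0 n)) = (\<Prod>j\<in>J. emeasure \<mu> (A0 (nat (j - 1 - s))))"
        unfolding J0_def by (rule prod.reindex[OF inj, unfolded comp_def])
      also have "\<dots> = (\<Prod>j\<in>J. emeasure \<mu> (A j))"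
        using sJ by (intro prod.cong) (auto simp: A0_def)
      finally show ?thesis .
    qed
    also have "\<dots> = emeasure (\<Pi>\<^sub>M i\<in>(UNIV::int set). \<mu>) (prod_emb UNIV (\<lambda>_. \<mu>) J (PiE J A))"
      by (rule emeasure_PiM_emb[OF noise_prob _ J(1) A, symmetric]) auto
    finally show "emeasure (distr PP.lim (\<Pi>\<^sub>M i\<in>(UNIV::int set). borel) (\<lambda>x. \<lambda>i\<in>UNIV. Nc i x)) (prod_emb UNIV (\<lambda>_. \<mu>) J (PiE J A))
        = emeasure (\<Pi>\<^sub>M i\<in>(UNIV::int set). \<mu>) (prod_emb UNIV (\<lambda>_. \<mu>) J (PiE J A))" .
  qed
  show ?thesis
    by (subst prob_space.indep_vars_iff_distr_eq_PiM[OF PP.P.prob_space_axioms _ Nm]) (simp_all add: lhs rhs)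
qed

end



lemma axis_vm: "axis i 1 v* (G::real^'n^'m) = G $ i"
proof -
  have "\<And>j. (\<Sum>r\<in>UNIV. axis i 1 $ r * G $ r $ j) = G $ i $ j"
    by (simp add: axis_def if_distrib[of "\<lambda>x. x * _"] cong: if_cong)
  then show ?thesis by (simp add: vec_eq_iff vector_matrix_mult_def)
qed

lemma scaleR_vm: "(k *\<^sub>R x) v* (A::real^'n^'m) = k *\<^sub>R (x v* A)"
  by (simp add: vec_eq_iff vector_matrix_mult_def sum_distrib_left algebra_simps)

lemma dir_deriv_seq:
  fixes f :: "real^'n \<Rightarrow> real^'m" and G :: "real^'m^'n"
  assumes d: "(f has_derivative (\<lambda>h. h v* G)) (at x)"
  shows "(\<lambda>k. (f (x + (1 / real (Suc k)) *\<^sub>R h) - f x) /\<^sub>R (1 / real (Suc k))) \<longlonglongrightarrow> h v* G"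
proof -
  define D where "D = h v* G"
  define \<phi> where "\<phi> = (\<lambda>t::real. f (x + t *\<^sub>R h))"
  have g: "((\<lambda>t::real. x + t *\<^sub>R h) has_derivative (\<lambda>t. t *\<^sub>R h)) (at 0)"
    by (auto intro!: derivative_eq_intros)
  have d': "(f has_derivative (\<lambda>h. h v* G)) (at ((\<lambda>t::real. x + t *\<^sub>R h) 0))" using d by simp
  have "(\<phi> has_derivative (\<lambda>t. t *\<^sub>R D)) (at 0)"
    using diff_chain_at[OF g d'] by (simp add: \<phi>_def D_def comp_def scaleR_vm)
  then have L: "((\<lambda>y. norm (\<phi> y - \<phi> 0 - y *\<^sub>R D) / norm (y - 0)) \<longlongrightarrow> 0) (at (0::real))"
    by (simp add: has_derivative_iff_norm)
  have t0: "filterlim (\<lambda>k. 1 / real (Suc k)) (at (0::real)) sequentially"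
  proof (subst filterlim_at, intro conjI)
    show "\<forall>\<^sub>F k in sequentially. 1 / real (Suc k) \<in> UNIV \<and> 1 / real (Suc k) \<noteq> 0" by simp
    show "(\<lambda>k. 1 / real (Suc k)) \<longlonglongrightarrow> 0"
      using LIMSEQ_Suc[OF lim_1_over_n] by simp
  qed
  have "(\<lambda>k. norm (\<phi> (1 / real (Suc k)) - \<phi> 0 - (1 / real (Suc k)) *\<^sub>R D) / norm (1 / real (Suc k) - 0)) \<longlonglongrightarrow> 0"
    by (rule filterlim_compose[OF L t0])
  moreover have "\<And>k. norm (\<phi> (1 / real (Suc k)) - \<phi> 0 - (1 / real (Suc k)) *\<^sub>R D) / norm (1 / real (Suc k) - 0)
      = norm ((\<phi> (1 / real (Suc k)) - \<phi> 0) /\<^sub>R (1 / real (Suc k)) - D)"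
  proof -
    fix k
    have "(\<phi> (1 / real (Suc k)) - \<phi> 0) /\<^sub>R (1 / real (Suc k)) - D
        = (real (Suc k)) *\<^sub>R (\<phi> (1 / real (Suc k)) - \<phi> 0 - (1 / real (Suc k)) *\<^sub>R D)"
      by (simp add: algebra_simps)
    then show "norm (\<phi> (1 / real (Suc k)) - \<phi> 0 - (1 / real (Suc k)) *\<^sub>R D) / norm (1 / real (Suc k) - 0)
      = norm ((\<phi> (1 / real (Suc k)) - \<phi> 0) /\<^sub>R (1 / real (Suc k)) - D)"
      by (simp add: divide_inverse)
  qed
  ultimately have "(\<lambda>k. norm ((\<phi> (1 / real (Suc k)) - \<phi> 0) /\<^sub>R (1 / real (Suc k)) - D)) \<longlonglongrightarrow> 0"
    by simp
  then have "(\<lambda>k. (\<phi> (1 / real (Suc k)) - \<phi> 0) /\<^sub>R (1 / real (Suc k)) - D) \<longlonglongrightarrow> 0"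
    by (rule tendsto_norm_zero_cancel)
  then have "(\<lambda>k. (\<phi> (1 / real (Suc k)) - \<phi> 0) /\<^sub>R (1 / real (Suc k))) \<longlonglongrightarrow> D"
    by (rule LIM_zero_cancel)
  then show ?thesis by (simp add: \<phi>_def D_def)
qed

lemma cont2_meas:
  fixes h :: "'a::second_countable_topology \<Rightarrow> 'b::second_countable_topology \<Rightarrow> 'c::topological_space"
  assumes c: "continuous_on UNIV (\<lambda>p. h (fst p) (snd p))"
    and f: "f \<in> borel_measurable M" and g: "g \<in> borel_measurable M"
  shows "(\<lambda>x. h (f x) (g x)) \<in> borel_measurable M"
proof -
  have "(\<lambda>x. (f x, g x)) \<in> M \<rightarrow>\<^sub>M borel \<Otimes>\<^sub>M borel" using f g by (rule measurable_Pair)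
  then have "(\<lambda>x. (f x, g x)) \<in> borel_measurable M" by (simp only: borel_prod)
  from measurable_compose[OF this borel_measurable_continuous_onI[OF c]] show ?thesis by simp
qed

lemma Ga_meas_gen:
  fixes a :: "real^'d \<Rightarrow> real^'m \<Rightarrow> real^'d" and Ga :: "real^'d \<Rightarrow> real^'m \<Rightarrow> real^'d^'d"
  assumes a_cont: "continuous_on UNIV (\<lambda>(x, n). a x n)"
    and a_deriv: "\<forall>x n. ((\<lambda>y. a y n) has_derivative (\<lambda>h. h v* Ga x n)) (at x)"
  shows "(\<lambda>p. Ga (fst p) (snd p)) \<in> borel_measurable borel"
proof (rule borel_measurable_LIMSEQ_metric)
  let ?t = "\<lambda>k. 1 / real (Suc k)"
  let ?D = "\<lambda>k (p :: (real^'d) \<times> (real^'m)). \<chi> i. (a (fst p + ?t k *\<^sub>R axis i 1) (snd p) - a (fst p) (snd p)) /\<^sub>R ?t k"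
  fix k
  have ac: "continuous_on UNIV (\<lambda>p. a (fst p) (snd p))" using a_cont by (simp add: case_prod_beta')
  have "continuous_on UNIV (?D k)"
  proof (intro continuous_on_vec_lambda continuous_intros)
    fix i
    have "continuous_on UNIV (\<lambda>p::(real^'d) \<times> (real^'m). (fst p + ?t k *\<^sub>R axis i 1, snd p))"
      by (intro continuous_intros)
    from continuous_on_compose2[OF ac this] show "continuous_on UNIV (\<lambda>p. a (fst p + ?t k *\<^sub>R axis i 1) (snd p))"
      by simp
    show "continuous_on UNIV (\<lambda>p. a (fst p) (snd p))" by (rule ac)
  qed
  then show "?D k \<in> borel_measurable borel" by (rule borel_measurable_continuous_onI)
next
  fix p :: "(real^'d) \<times> (real^'m)"
  let ?t = "\<lambda>k. 1 / real (Suc k)"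
  show "(\<lambda>k. \<chi> i. (a (fst p + ?t k *\<^sub>R axis i 1) (snd p) - a (fst p) (snd p)) /\<^sub>R ?t k) \<longlonglongrightarrow> Ga (fst p) (snd p)"
  proof (rule vec_tendstoI)
    fix i
    from dir_deriv_seq[OF a_deriv[THEN spec[of _ "fst p"], THEN spec[of _ "snd p"]], where h = "axis i 1"]
    show "(\<lambda>k. (\<chi> i. (a (fst p + ?t k *\<^sub>R axis i 1) (snd p) - a (fst p) (snd p)) /\<^sub>R ?t k) $ i) \<longlonglongrightarrow> Ga (fst p) (snd p) $ i"
      by (simp add: axis_vm)
  qed
qed




lemma prodA_shift: "prodA (\<lambda>s. A (s + k)) t j = prodA A (t + k) j"
  by (induction j) (simp_all add: algebra_simps)

lemma phi_shift: "phi \<alpha> (\<lambda>s. A (s + k)) G (\<lambda>s. X (s + k)) t = phi \<alpha> A G X (t + k)"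
proof -
  have "\<And>j. phi_term \<alpha> (\<lambda>s. A (s + k)) G (\<lambda>s. X (s + k)) t j = phi_term \<alpha> A G X (t + k) j"
    by (simp add: phi_term_def prodA_shift algebra_simps)
  then show ?thesis by (simp add: phi_def)
qed

lemma suminf_eq_lim: "suminf f = lim (\<lambda>n. \<Sum>i<n. f i)"
  by (simp add: suminf_def sums_def lim_def)

locale MC2 = MC a \<mu> \<pi> for a :: "real^'d \<Rightarrow> real^'m \<Rightarrow> real^'d" and \<mu> \<pi> +
  fixes Ga :: "real^'d \<Rightarrow> real^'m \<Rightarrow> real^'d^'d" and Gpsi :: "real^'d \<Rightarrow> real^'l^'d" and \<alpha> :: real
  assumes a_deriv: "\<forall>x n. ((\<lambda>y. a y n) has_derivative (\<lambda>h. h v* Ga x n)) (at x)"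
    and Gpsi_cont: "continuous_on UNIV Gpsi"
begin

lemma Ga_meas: "(\<lambda>p. Ga (fst p) (snd p)) \<in> borel_measurable borel"
  by (rule Ga_meas_gen[OF a_cont a_deriv])

lemma Ga_meas2:
  assumes "f \<in> borel_measurable M" "g \<in> borel_measurable M"
  shows "(\<lambda>x. Ga (f x) (g x)) \<in> borel_measurable M"
proof -
  have "(\<lambda>x. (f x, g x)) \<in> M \<rightarrow>\<^sub>M borel \<Otimes>\<^sub>M borel" using assms by (rule measurable_Pair)
  then have "(\<lambda>x. (f x, g x)) \<in> borel_measurable M" by (simp only: borel_prod)
  from measurable_compose[OF this Ga_meas] show ?thesis by simp
qed

lemma mm_meas:
  fixes f :: "_ \<Rightarrow> real^'n^'k" and g :: "_ \<Rightarrow> real^'j^'n"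
  assumes "f \<in> borel_measurable M" "g \<in> borel_measurable M"
  shows "(\<lambda>x. f x ** g x) \<in> borel_measurable M"
proof (rule cont2_meas[OF _ assms])
  show "continuous_on UNIV (\<lambda>p::(real^'n^'k) \<times> (real^'j^'n). fst p ** snd p)"
    unfolding matrix_matrix_mult_def by (intro continuous_intros)
qed

lemma tr_meas:
  fixes f :: "_ \<Rightarrow> real^'n^'k"
  assumes "f \<in> borel_measurable M"
  shows "(\<lambda>x. transpose (f x)) \<in> borel_measurable M"
proof -
  have "continuous_on UNIV (\<lambda>A::real^'n^'k. transpose A)"
    unfolding transpose_def by (intro continuous_intros)
  from measurable_compose[OF assms borel_measurable_continuous_onI[OF this]] show ?thesis by simp
qed

lemma Gpsi_meas: "Gpsi \<in> borel_measurable borel"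
  by (rule borel_measurable_continuous_onI[OF Gpsi_cont])

definition Aw :: "(int \<Rightarrow> (real^'d) \<times> (real^'m)) \<Rightarrow> int \<Rightarrow> real^'d^'d" where
  "Aw \<omega> s = Ga (Xc (s - 1) \<omega>) (Nc s \<omega>)"

lemma Aw_meas: "(\<lambda>\<omega>. Aw \<omega> s) \<in> borel_measurable PP.lim"
  unfolding Aw_def by (rule Ga_meas2[OF Xc_meas Nc_meas])

lemma prodA_meas: "(\<lambda>\<omega>. prodA (Aw \<omega>) t k) \<in> borel_measurable PP.lim"
proof (induction k)
  case 0 then show ?case by simp
next
  case (Suc k)
  show ?case using mm_meas[OF Aw_meas Suc] by simp
qed

lemma phi_term_meas: "(\<lambda>\<omega>. phi_term \<alpha> (Aw \<omega>) Gpsi (\<lambda>s. Xc s \<omega>) t k) \<in> borel_measurable PP.lim"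
proof -
  have "(\<lambda>\<omega>. transpose (prodA (Aw \<omega>) t k) ** Gpsi (Xc (t - int k) \<omega>)) \<in> borel_measurable PP.lim"
    by (rule mm_meas[OF tr_meas[OF prodA_meas] measurable_compose[OF Xc_meas Gpsi_meas]])
  then show ?thesis unfolding phi_term_def by (rule borel_measurable_scaleR[OF borel_measurable_const])
qed

lemma Phi_meas: "(\<lambda>\<omega>. phi \<alpha> (Aw \<omega>) Gpsi (\<lambda>s. Xc s \<omega>) t) \<in> borel_measurable PP.lim"
  unfolding phi_def suminf_eq_lim
  by (rule borel_measurable_lim_metric, rule borel_measurable_sum, rule phi_term_meas)

lemma Aw_shift: "Aw (\<lambda>t. \<omega> (t + k)) s = Aw \<omega> (s + k)"
  by (simp add: Aw_def Xc_def Nc_def algebra_simps)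

lemma stationary:
  "distr PP.lim (\<Pi>\<^sub>M t\<in>(UNIV::int set). borel)
     (\<lambda>\<omega> t. (Xc (t + k) \<omega>, phi \<alpha> (\<lambda>s. Ga (Xc (s - 1) \<omega>) (Nc s \<omega>)) Gpsi (\<lambda>s. Xc s \<omega>) (t + k)))
   = distr PP.lim (\<Pi>\<^sub>M t\<in>(UNIV::int set). borel)
     (\<lambda>\<omega> t. (Xc t \<omega>, phi \<alpha> (\<lambda>s. Ga (Xc (s - 1) \<omega>) (Nc s \<omega>)) Gpsi (\<lambda>s. Xc s \<omega>) t))"
proof -
  define G where "G = (\<lambda>\<omega> t. (Xc t \<omega>, phi \<alpha> (Aw \<omega>) Gpsi (\<lambda>s. Xc s \<omega>) t))"
  have Aw_eq: "Aw \<omega> = (\<lambda>s. Ga (Xc (s - 1) \<omega>) (Nc s \<omega>))" for \<omega> by (simp add: Aw_def fun_eq_iff)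
  have Gm: "G \<in> PP.lim \<rightarrow>\<^sub>M (\<Pi>\<^sub>M t\<in>(UNIV::int set). (borel :: ((real^'d) \<times> (real^'l^'d)) measure))"
  proof (unfold G_def, rule measurable_PiM_single')
    fix t :: int
    have "(\<lambda>\<omega>. (Xc t \<omega>, phi \<alpha> (Aw \<omega>) Gpsi (\<lambda>s. Xc s \<omega>) t)) \<in> PP.lim \<rightarrow>\<^sub>M borel \<Otimes>\<^sub>M borel"
      by (rule measurable_Pair[OF Xc_meas Phi_meas])
    then show "(\<lambda>\<omega>. (Xc t \<omega>, phi \<alpha> (Aw \<omega>) Gpsi (\<lambda>s. Xc s \<omega>) t)) \<in> borel_measurable PP.lim"
      by (simp only: borel_prod)
  qed simp
  have sh: "(\<lambda>\<omega> t. \<omega> (t + k)) \<in> PP.lim \<rightarrow>\<^sub>M PBI"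
  proof -
    have "(\<lambda>\<omega> t. \<omega> (t + k)) \<in> PBI \<rightarrow>\<^sub>M PBI"
      by (rule measurable_PiM_single') (auto intro: measurable_component_singleton)
    then show ?thesis by (subst measurable_cong_sets[OF PP.sets_lim refl])
  qed
  have Gm': "G \<in> PBI \<rightarrow>\<^sub>M (\<Pi>\<^sub>M t\<in>(UNIV::int set). (borel :: ((real^'d) \<times> (real^'l^'d)) measure))"
    using Gm by (subst (asm) measurable_cong_sets[OF PP.sets_lim refl])
  have eq: "(\<lambda>\<omega> t. (Xc (t + k) \<omega>, phi \<alpha> (\<lambda>s. Ga (Xc (s - 1) \<omega>) (Nc s \<omega>)) Gpsi (\<lambda>s. Xc s \<omega>) (t + k)))
      = G \<circ> (\<lambda>\<omega> t. \<omega> (t + k))"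
  proof (intro ext)
    fix \<omega> t
    have "phi \<alpha> (Aw (\<lambda>t. \<omega> (t + k))) Gpsi (\<lambda>s. Xc s (\<lambda>t. \<omega> (t + k))) t
        = phi \<alpha> (\<lambda>s. Aw \<omega> (s + k)) Gpsi (\<lambda>s. Xc (s + k) \<omega>) t"
    proof -
      have "Aw (\<lambda>t. \<omega> (t + k)) = (\<lambda>s. Aw \<omega> (s + k))" by (rule ext) (rule Aw_shift)
      then show ?thesis by (simp add: Xc_def)
    qed
    also have "\<dots> = phi \<alpha> (Aw \<omega>) Gpsi (\<lambda>s. Xc s \<omega>) (t + k)" by (rule phi_shift)
    finally show "(Xc (t + k) \<omega>, phi \<alpha> (\<lambda>s. Ga (Xc (s - 1) \<omega>) (Nc s \<omega>)) Gpsi (\<lambda>s. Xc s \<omega>) (t + k))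
        = (G \<circ> (\<lambda>\<omega> t. \<omega> (t + k))) \<omega> t"
      by (simp add: G_def Aw_eq Xc_def)
  qed
  have "distr PP.lim (\<Pi>\<^sub>M t\<in>(UNIV::int set). borel) (G \<circ> (\<lambda>\<omega> t. \<omega> (t + k)))
      = distr (distr PP.lim PBI (\<lambda>\<omega> t. \<omega> (t + k))) (\<Pi>\<^sub>M t\<in>(UNIV::int set). borel) G"
    by (rule distr_distr[OF Gm' sh, symmetric])
  also have "\<dots> = distr PP.lim (\<Pi>\<^sub>M t\<in>(UNIV::int set). borel) G" by (simp only: L_shift_int)
  finally show ?thesis unfolding eq by (simp add: G_def Aw_eq)
qed

end



primrec sensP :: "(real^'d \<Rightarrow> real^'m \<Rightarrow> real^'d^'d) \<Rightarrow> (nat \<Rightarrow> (real^'d) \<times> (real^'m)) \<Rightarrow> nat \<Rightarrow> real^'d^'d" where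
  "sensP Ga y 0 = mat 1"
| "sensP Ga y (Suc r) = transpose (Ga (fst (y r)) (snd (y r))) ** sensP Ga y r"

lemma prodA_Suc': "prodA A t (Suc k) = prodA A (t - 1) k ** A t"
proof (induction k arbitrary: t)
  case 0 then show ?case by (simp add: matrix_mul_lid matrix_mul_rid)
next
  case (Suc k)
  have "prodA A t (Suc (Suc k)) = A (t - int (Suc k)) ** prodA A t (Suc k)" by simp
  also have "\<dots> = A (t - int (Suc k)) ** (prodA A (t - 1) k ** A t)" by (simp only: Suc)
  also have "\<dots> = (A (t - 1 - int k) ** prodA A (t - 1) k) ** A t"
    by (simp add: matrix_mul_assoc algebra_simps)
  also have "\<dots> = prodA A (t - 1) (Suc k) ** A t" by simp
  finally show ?case .
qed

definition col :: "'l \<Rightarrow> real^'l^'d \<Rightarrow> real^'d" where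
  "col j G = (\<chi> r. G $ r $ j)"

definition gfun :: "bool \<Rightarrow> 'd \<Rightarrow> real^'d \<Rightarrow> real^'d" where
  "gfun b i c = (if b then cos (c $ i) else - sin (c $ i)) *\<^sub>R axis i 1"

lemma cs_ge1: "1 \<le> \<bar>cos (x::real)\<bar> + \<bar>sin x\<bar>"
proof -
  have s: "\<bar>sin x\<bar> * \<bar>sin x\<bar> \<le> \<bar>sin x\<bar>"
    using mult_right_mono[of "\<bar>sin x\<bar>" 1 "\<bar>sin x\<bar>"] abs_sin_le_one[of x] by simp
  have c: "\<bar>cos x\<bar> * \<bar>cos x\<bar> \<le> \<bar>cos x\<bar>"
    using mult_right_mono[of "\<bar>cos x\<bar>" 1 "\<bar>cos x\<bar>"] abs_cos_le_one[of x] by simp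
  have "sin x * sin x + cos x * cos x = 1" using sin_cos_squared_add[of x] by (simp add: power2_eq_square)
  then show ?thesis using s c by (simp add: abs_mult_self_eq)
qed

lemma mm_col: "(S ** G) $ i $ j = (S *v col j G) $ i"
  by (simp add: matrix_matrix_mult_def matrix_vector_mult_def col_def)

lemma gfun_inner: "gfun b i c \<bullet> w = (if b then cos (c $ i) else - sin (c $ i)) * w $ i"
  by (simp add: gfun_def inner_axis')

lemma comp_bound: "\<bar>w $ i\<bar> \<le> \<bar>gfun True i c \<bullet> w\<bar> + \<bar>gfun False i c \<bullet> w\<bar>"
proof -
  have "\<bar>w $ i\<bar> = 1 * \<bar>w $ i\<bar>" by simp
  also have "\<dots> \<le> (\<bar>cos (c $ i)\<bar> + \<bar>sin (c $ i)\<bar>) * \<bar>w $ i\<bar>"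
    by (rule mult_right_mono[OF cs_ge1]) simp
  also have "\<dots> = \<bar>gfun True i c \<bullet> w\<bar> + \<bar>gfun False i c \<bullet> w\<bar>"
    by (simp add: gfun_inner abs_mult algebra_simps)
  finally show ?thesis .
qed

lemma norm_mat_bound:
  fixes M :: "real^'l^'d"
  shows "norm M \<le> (\<Sum>i\<in>UNIV. \<Sum>j\<in>UNIV. \<bar>M $ i $ j\<bar>)"
proof -
  have "norm M \<le> (\<Sum>i\<in>UNIV. norm (M $ i))"
    unfolding norm_vec_def by (rule L2_set_le_sum) simp
  also have "\<dots> \<le> (\<Sum>i\<in>UNIV. \<Sum>j\<in>UNIV. \<bar>M $ i $ j\<bar>)"
    by (rule sum_mono) (rule norm_le_l1_cart)
  finally show ?thesis .
qed


lemma Linf_bound: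
  fixes g h :: "real^'d \<Rightarrow> real"
  assumes v1: "\<forall>x. 1 \<le> v x" and gm: "g \<in> borel_measurable borel"
    and le: "\<And>x. \<bar>g x\<bar> \<le> \<bar>h x\<bar>" and h: "in_Linf_v v h"
  shows "in_Linf_v v g"
  unfolding in_Linf_v_def
proof (intro conjI gm)
  obtain C where C: "\<And>x. \<bar>h x\<bar> / v x \<le> C" using h unfolding in_Linf_v_def bdd_above_def by auto
  have "\<And>x. \<bar>g x\<bar> / v x \<le> C"
  proof -
    fix x
    have "0 < v x" using v1 by (metis less_le_trans zero_less_one)
    then have "\<bar>g x\<bar> / v x \<le> \<bar>h x\<bar> / v x" using le[of x] by (simp add: divide_right_mono)
    then show "\<bar>g x\<bar> / v x \<le> C" using C[of x] by simp
  qed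
  then show "bdd_above (range (\<lambda>x. \<bar>g x\<bar> / v x))" by (auto simp: bdd_above_def)
qed

lemma Linf_const_bound:
  fixes g :: "real^'d \<Rightarrow> real"
  assumes v1: "\<forall>x. 1 \<le> v x" and gm: "g \<in> borel_measurable borel" and le: "\<And>x. \<bar>g x\<bar> \<le> 1"
  shows "in_Linf_v v g"
proof (rule Linf_bound[OF v1 gm, of "\<lambda>_. 1"])
  show "\<And>x. \<bar>g x\<bar> \<le> \<bar>1\<bar>" using le by simp
  show "in_Linf_v v (\<lambda>_. 1)" unfolding in_Linf_v_def
  proof (intro conjI)
    have "\<And>x. \<bar>1::real\<bar> / v x \<le> 1"
    proof -
      fix x
      have "1 \<le> v x" using v1 by simp
      then show "\<bar>1::real\<bar> / v x \<le> 1" by (simp add: divide_le_eq_1)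
    qed
    then show "bdd_above (range (\<lambda>x. \<bar>1::real\<bar> / v x))" by (auto simp: bdd_above_def)
  qed simp
qed

lemma norm_col_le: "norm (col j G) \<le> norm G"
  by (rule norm_le_componentwise_cart) (simp add: col_def component_le_norm_cart)

lemma vm_col: "(h v* G) $ j = col j G \<bullet> h"
  by (simp add: vector_matrix_mult_def inner_vec_def col_def mult.commute)

locale MC3 = MC2 a \<mu> \<pi> Ga Gpsi \<alpha> for a :: "real^'d \<Rightarrow> real^'m \<Rightarrow> real^'d" and \<mu> \<pi>
   and Ga :: "real^'d \<Rightarrow> real^'m \<Rightarrow> real^'d^'d" and Gpsi :: "real^'d \<Rightarrow> real^'l^'d" and \<alpha> +
  fixes \<psi> :: "real^'d \<Rightarrow> real^'l" and v :: "real^'d \<Rightarrow> real"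
  assumes alpha: "0 < \<alpha>" "\<alpha> < 1"
    and psi_deriv: "\<forall>x. (\<psi> has_derivative (\<lambda>h. h v* Gpsi x)) (at x)"
    and psi_L: "in_Linf_v v (\<lambda>x. (norm (\<psi> x))\<^sup>2)"
    and Gpsi_L: "in_Linf_v v (\<lambda>x. (norm (Gpsi x))\<^sup>2)"
    and v_ge1: "\<forall>x. 1 \<le> v x"
    and A3: "\<forall>(f :: real^'d \<Rightarrow> real) (g :: real^'d \<Rightarrow> real) gf gg.
         (\<forall>x. (f has_derivative (\<lambda>h. gf x \<bullet> h)) (at x)) \<and> continuous_on UNIV gf \<and>
         (\<forall>x. (g has_derivative (\<lambda>h. gg x \<bullet> h)) (at x)) \<and> continuous_on UNIV gg \<and>
         in_Linf_v v (\<lambda>x. (f x)\<^sup>2) \<and> in_Linf_v v (\<lambda>x. (g x)\<^sup>2) \<and>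
         in_Linf_v v (\<lambda>x. (norm (gf x))\<^sup>2) \<and> in_Linf_v v (\<lambda>x. (norm (gg x))\<^sup>2) \<longrightarrow>
         summable (\<lambda>t. \<bar>\<integral>\<omega>. gf (chain a (fst \<omega>) (snd \<omega>) t) \<bullet>
                                 (sens Ga a (fst \<omega>) (snd \<omega>) t *v gg (fst \<omega>))
                           \<partial>(\<pi> \<Otimes>\<^sub>M (\<Pi>\<^sub>M i\<in>(UNIV::nat set). \<mu>))\<bar>) \<and>
         (\<Sum>t. \<integral>\<^sup>+\<omega>. ennreal \<bar>gf (chain a (fst \<omega>) (snd \<omega>) t) \<bullet>
                                 (sens Ga a (fst \<omega>) (snd \<omega>) t *v gg (fst \<omega>))\<bar>
                           \<partial>(\<pi> \<Otimes>\<^sub>M (\<Pi>\<^sub>M i\<in>(UNIV::nat set). \<mu>))) < \<top>"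
begin

lemma A3_inst:
  "(\<Sum>k. \<integral>\<^sup>+\<omega>. ennreal \<bar>gfun b i (chain a (fst \<omega>) (snd \<omega>) k) \<bullet>
       (sens Ga a (fst \<omega>) (snd \<omega>) k *v col j (Gpsi (fst \<omega>)))\<bar> \<partial>\<Omega>) < \<top>"
proof -
  define f where "f = (\<lambda>x::real^'d. if b then sin (x $ i) else cos (x $ i))"
  define g where "g = (\<lambda>x. \<psi> x $ j)"
  have h1: "\<forall>x. (f has_derivative (\<lambda>h. gfun b i x \<bullet> h)) (at x)"
  proof
    fix x :: "real^'d"
    have vn: "((\<lambda>x::real^'d. x $ i) has_derivative (\<lambda>x. x $ i)) (at x)"
      by (rule bounded_linear_imp_has_derivative[OF bounded_linear_vec_nth])
    show "(f has_derivative (\<lambda>h. gfun b i x \<bullet> h)) (at x)"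
    proof (cases b)
      case True
      then show ?thesis unfolding f_def gfun_def
        by (auto intro!: derivative_eq_intros vn simp: inner_axis')
    next
      case False
      then show ?thesis unfolding f_def gfun_def
        by (auto intro!: derivative_eq_intros vn simp: inner_axis')
    qed
  qed
  have h2: "continuous_on UNIV (gfun b i)"
  proof (cases b)
    case True then show ?thesis unfolding gfun_def by simp (intro continuous_intros)
  next
    case False then show ?thesis unfolding gfun_def by simp (intro continuous_intros)
  qed
  have h3: "\<forall>x. (g has_derivative (\<lambda>h. col j (Gpsi x) \<bullet> h)) (at x)"
  proof
    fix x
    have "((\<lambda>x. \<psi> x $ j) has_derivative (\<lambda>h. (h v* Gpsi x) $ j)) (at x)"
      by (rule bounded_linear.has_derivative[OF bounded_linear_vec_nth psi_deriv[rule_format]])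
    then show "(g has_derivative (\<lambda>h. col j (Gpsi x) \<bullet> h)) (at x)"
      unfolding g_def by (simp add: vm_col)
  qed
  have h4: "continuous_on UNIV (\<lambda>x. col j (Gpsi x))"
    unfolding col_def by (intro continuous_intros continuous_on_vec_lambda Gpsi_cont)
  have psi_cont: "continuous_on UNIV \<psi>"
    by (rule has_derivative_continuous_on) (use psi_deriv in auto)
  have h5: "in_Linf_v v (\<lambda>x. (f x)\<^sup>2)"
  proof (rule Linf_const_bound[OF v_ge1])
    show "(\<lambda>x. (f x)\<^sup>2) \<in> borel_measurable borel"
    proof (rule borel_measurable_continuous_onI)
      show "continuous_on UNIV (\<lambda>x. (f x)\<^sup>2)"
        by (cases b) (simp_all add: f_def, (intro continuous_intros)+)
    qed
    show "\<bar>(f x)\<^sup>2\<bar> \<le> 1" for x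
      by (auto simp: f_def abs_square_le_1 abs_sin_le_one abs_cos_le_one)
  qed
  have h6: "in_Linf_v v (\<lambda>x. (g x)\<^sup>2)"
  proof (rule Linf_bound[OF v_ge1 _ _ psi_L])
    show "(\<lambda>x. (g x)\<^sup>2) \<in> borel_measurable borel"
      unfolding g_def by (intro borel_measurable_continuous_onI continuous_intros psi_cont)
    show "\<bar>(g x)\<^sup>2\<bar> \<le> \<bar>(norm (\<psi> x))\<^sup>2\<bar>" for x
      unfolding g_def using power_mono[OF component_le_norm_cart[of "\<psi> x" j] abs_ge_zero, of 2]
      by simp
  qed
  have h7: "in_Linf_v v (\<lambda>x. (norm (gfun b i x))\<^sup>2)"
  proof (rule Linf_const_bound[OF v_ge1])
    show "(\<lambda>x. (norm (gfun b i x))\<^sup>2) \<in> borel_measurable borel"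
      by (intro borel_measurable_continuous_onI continuous_intros h2)
    show "\<bar>(norm (gfun b i x))\<^sup>2\<bar> \<le> 1" for x
      by (auto simp: gfun_def abs_square_le_1 abs_sin_le_one abs_cos_le_one)
  qed
  have h8: "in_Linf_v v (\<lambda>x. (norm (col j (Gpsi x)))\<^sup>2)"
  proof (rule Linf_bound[OF v_ge1 _ _ Gpsi_L])
    show "(\<lambda>x. (norm (col j (Gpsi x)))\<^sup>2) \<in> borel_measurable borel"
      by (intro borel_measurable_continuous_onI continuous_intros h4)
    show "\<bar>(norm (col j (Gpsi x)))\<^sup>2\<bar> \<le> \<bar>(norm (Gpsi x))\<^sup>2\<bar>" for x
      using norm_col_le[of j "Gpsi x"] by (simp add: abs_le_square_iff)
  qed
  have "(\<forall>x. (f has_derivative (\<lambda>h. gfun b i x \<bullet> h)) (at x)) \<and> continuous_on UNIV (gfun b i) \<and>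
         (\<forall>x. (g has_derivative (\<lambda>h. col j (Gpsi x) \<bullet> h)) (at x)) \<and> continuous_on UNIV (\<lambda>x. col j (Gpsi x)) \<and>
         in_Linf_v v (\<lambda>x. (f x)\<^sup>2) \<and> in_Linf_v v (\<lambda>x. (g x)\<^sup>2) \<and>
         in_Linf_v v (\<lambda>x. (norm (gfun b i x))\<^sup>2) \<and> in_Linf_v v (\<lambda>x. (norm (col j (Gpsi x)))\<^sup>2)"
    using h1 h2 h3 h4 h5 h6 h7 h8 by blast
  from A3[THEN spec[of _ f], THEN spec[of _ g], THEN spec[of _ "gfun b i"], THEN spec[of _ "\<lambda>x. col j (Gpsi x)"], THEN mp, OF this]
  show ?thesis by blast
qed


lemma sensP_Y: "sensP Ga (Y z) k = sens Ga a (fst z) (snd z) k"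
  by (induction k) (simp_all add: Y_def)

lemma tr_prodA: "transpose (prodA (Aw \<omega>) t k) = sensP Ga (\<lambda>n. \<omega> (t - int k + int n)) k"
proof (induction k arbitrary: t)
  case 0 then show ?case by (simp add: transpose_mat)
next
  case (Suc k)
  have "transpose (prodA (Aw \<omega>) t (Suc k)) = transpose (Aw \<omega> t) ** transpose (prodA (Aw \<omega>) (t - 1) k)"
    by (simp only: prodA_Suc' matrix_transpose_mul)
  also have "\<dots> = transpose (Aw \<omega> t) ** sensP Ga (\<lambda>n. \<omega> (t - 1 - int k + int n)) k"
    by (simp only: Suc)
  also have "(\<lambda>n. \<omega> (t - 1 - int k + int n)) = (\<lambda>n. \<omega> (t - int (Suc k) + int n))"
    by (simp add: algebra_simps)
  also have "Aw \<omega> t = Ga (fst (\<omega> (t - int (Suc k) + int k))) (snd (\<omega> (t - int (Suc k) + int k)))"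
    by (simp add: Aw_def Xc_def Nc_def)
  finally show ?case by simp
qed

definition TP :: "nat \<Rightarrow> (nat \<Rightarrow> (real^'d) \<times> (real^'m)) \<Rightarrow> real^'l^'d" where
  "TP k y = (\<alpha> ^ k) *\<^sub>R (sensP Ga y k ** Gpsi (fst (y 0)))"

lemma phi_term_TP: "phi_term \<alpha> (Aw \<omega>) Gpsi (\<lambda>s. Xc s \<omega>) t k = TP k (\<lambda>n. \<omega> (t - int k + int n))"
  by (simp add: phi_term_def TP_def tr_prodA Xc_def)

definition trm :: "bool \<Rightarrow> 'd \<Rightarrow> 'l \<Rightarrow> nat \<Rightarrow> (nat \<Rightarrow> (real^'d) \<times> (real^'m)) \<Rightarrow> real" where
  "trm b i j k y = \<bar>gfun b i (fst (y k)) \<bullet> (sensP Ga y k *v col j (Gpsi (fst (y 0))))\<bar>"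

lemma norm_TP_le: "norm (TP k y) \<le> (\<Sum>i\<in>UNIV. \<Sum>j\<in>UNIV. trm True i j k y + trm False i j k y)"
proof -
  define M where "M = sensP Ga y k ** Gpsi (fst (y 0))"
  have a1: "\<bar>\<alpha> ^ k\<bar> \<le> 1" using alpha by (simp add: power_le_one)
  have "norm (TP k y) = \<bar>\<alpha> ^ k\<bar> * norm M" by (simp add: TP_def M_def)
  also have "\<dots> \<le> norm M" using a1 by (simp add: mult_left_le_one_le)
  also have "\<dots> \<le> (\<Sum>i\<in>UNIV. \<Sum>j\<in>UNIV. \<bar>M $ i $ j\<bar>)" by (rule norm_mat_bound)
  also have "\<dots> \<le> (\<Sum>i\<in>UNIV. \<Sum>j\<in>UNIV. trm True i j k y + trm False i j k y)"
  proof (intro sum_mono)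
    fix i j
    show "\<bar>M $ i $ j\<bar> \<le> trm True i j k y + trm False i j k y"
      unfolding M_def mm_col trm_def by (rule comp_bound)
  qed
  finally show ?thesis .
qed

lemma gfun_cont: "continuous_on UNIV (gfun b i)"
proof (cases b)
  case True then show ?thesis unfolding gfun_def by simp (intro continuous_intros)
next
  case False then show ?thesis unfolding gfun_def by simp (intro continuous_intros)
qed

lemma fst_PB: "(\<lambda>y::nat \<Rightarrow> (real^'d) \<times> (real^'m). fst (y r)) \<in> borel_measurable PB"
  using measurable_compose[OF comp_PB fst_b] by simp
lemma snd_PB: "(\<lambda>y::nat \<Rightarrow> (real^'d) \<times> (real^'m). snd (y r)) \<in> borel_measurable PB"
  using measurable_compose[OF comp_PB snd_b] by simp

lemma sensP_meas: "(\<lambda>y. sensP Ga y k) \<in> borel_measurable PB"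
proof (induction k)
  case 0 then show ?case by simp
next
  case (Suc k)
  show ?case using mm_meas[OF tr_meas[OF Ga_meas2[OF fst_PB snd_PB]] Suc] by simp
qed

lemma mv_meas:
  fixes f :: "_ \<Rightarrow> real^'n^'k" and g :: "_ \<Rightarrow> real^'n"
  assumes "f \<in> borel_measurable M" "g \<in> borel_measurable M"
  shows "(\<lambda>x. f x *v g x) \<in> borel_measurable M"
proof (rule cont2_meas[OF _ assms])
  show "continuous_on UNIV (\<lambda>p::(real^'n^'k) \<times> (real^'n). fst p *v snd p)"
    unfolding matrix_vector_mult_def by (intro continuous_intros)
qed

lemma col_Gpsi_meas: "(\<lambda>y::nat \<Rightarrow> (real^'d) \<times> (real^'m). col j (Gpsi (fst (y 0)))) \<in> borel_measurable PB"
proof -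
  have "continuous_on UNIV (\<lambda>x. col j (Gpsi x))"
    unfolding col_def by (intro continuous_intros continuous_on_vec_lambda Gpsi_cont)
  from measurable_compose[OF fst_PB borel_measurable_continuous_onI[OF this]] show ?thesis by simp
qed

lemma trm_meas: "trm b i j k \<in> borel_measurable PB"
proof -
  have "(\<lambda>y. gfun b i (fst (y k)) \<bullet> (sensP Ga y k *v col j (Gpsi (fst (y 0))))) \<in> borel_measurable PB"
    by (rule borel_measurable_inner[OF measurable_compose[OF fst_PB borel_measurable_continuous_onI[OF gfun_cont]]
          mv_meas[OF sensP_meas col_Gpsi_meas]])
  then show ?thesis unfolding trm_def[abs_def] by (rule borel_measurable_abs)
qed

lemma trm_Y: "trm b i j k (Y z) = \<bar>gfun b i (chain a (fst z) (snd z) k) \<bullet>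
       (sens Ga a (fst z) (snd z) k *v col j (Gpsi (fst z)))\<bar>"
  by (simp add: trm_def sensP_Y) (simp add: Y_def)

lemma AE_summ: "AE \<omega> in PP.lim. \<forall>t. summable (phi_term \<alpha> (\<lambda>s. Ga (Xc (s - 1) \<omega>) (Nc s \<omega>)) Gpsi (\<lambda>s. Xc s \<omega>) t)"
proof (rule AE_all_countable[THEN iffD2], rule allI)
  fix t :: int
  have Aw_eq: "(\<lambda>s. Ga (Xc (s - 1) \<omega>) (Nc s \<omega>)) = Aw \<omega>" for \<omega> by (simp add: Aw_def fun_eq_iff)
  define F where "F = (\<lambda>k \<omega>. ennreal (norm (phi_term \<alpha> (Aw \<omega>) Gpsi (\<lambda>s. Xc s \<omega>) t k)))"
  define H where "H = (\<lambda>k y. \<Sum>i\<in>UNIV. \<Sum>j\<in>UNIV. ennreal (trm True i j k y) + ennreal (trm False i j k y))"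
  define I where "I = (\<lambda>b i j k. \<integral>\<^sup>+z. ennreal (trm b i j k (Y z)) \<partial>\<Omega>)"
  have Fm: "\<And>k. F k \<in> borel_measurable PP.lim"
  proof -
    fix k
    have "(\<lambda>\<omega>. norm (phi_term \<alpha> (Aw \<omega>) Gpsi (\<lambda>s. Xc s \<omega>) t k)) \<in> borel_measurable PP.lim"
      using measurable_compose[OF phi_term_meas borel_measurable_norm] by simp
    from measurable_compose[OF this measurable_ennreal] show "F k \<in> borel_measurable PP.lim"
      by (simp add: F_def)
  qed
  have tm: "\<And>b i j k. (\<lambda>y. ennreal (trm b i j k y)) \<in> borel_measurable PB"
    by (rule measurable_compose[OF trm_meas measurable_ennreal])
  have Hm: "\<And>k. H k \<in> borel_measurable PB"
    unfolding H_def by (intro borel_measurable_sum borel_measurable_add tm)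
  have FH: "F k \<omega> \<le> H k (\<lambda>n. \<omega> (t - int k + int n))" for k \<omega>
  proof -
    let ?y = "\<lambda>n. \<omega> (t - int k + int n)"
    have "F k \<omega> = ennreal (norm (TP k ?y))" by (simp add: F_def phi_term_TP)
    also have "\<dots> \<le> ennreal (\<Sum>i\<in>UNIV. \<Sum>j\<in>UNIV. trm True i j k ?y + trm False i j k ?y)"
      by (rule ennreal_leI[OF norm_TP_le])
    also have "\<dots> = H k ?y"
      by (simp add: H_def sum_ennreal[symmetric] sum_nonneg trm_def ennreal_plus)
    finally show ?thesis .
  qed
  have intF: "integral\<^sup>N PP.lim (F k) \<le> (\<Sum>i\<in>UNIV. \<Sum>j\<in>UNIV. I True i j k + I False i j k)" for k
  proof -
    have "integral\<^sup>N PP.lim (F k) \<le> (\<integral>\<^sup>+\<omega>. H k (\<lambda>n. \<omega> (t - int k + int n)) \<partial>PP.lim)"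
      by (rule nn_integral_mono) (rule FH)
    also have "\<dots> = (\<integral>\<^sup>+y. H k y \<partial>distr PP.lim PB (\<lambda>\<omega> n. \<omega> ((t - int k) + int n)))"
      using nn_integral_distr[OF shI_meas, of "H k" "t - int k"] Hm by simp
    also have "\<dots> = (\<integral>\<^sup>+y. H k y \<partial>Q)" by (simp only: L_shift_nat)
    also have "\<dots> = (\<integral>\<^sup>+z. H k (Y z) \<partial>\<Omega>)"
      unfolding Q_def using nn_integral_distr[OF Y_meas, of "H k"] Hm by simp
    also have "\<dots> = (\<Sum>i\<in>UNIV. \<Sum>j\<in>UNIV. I True i j k + I False i j k)"
    proof -
      have tmY: "\<And>b i j. (\<lambda>z. ennreal (trm b i j k (Y z))) \<in> borel_measurable \<Omega>"
        by (rule measurable_compose[OF Y_meas tm])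
      show ?thesis unfolding H_def I_def
        by (simp add: nn_integral_sum nn_integral_add tmY borel_measurable_sum borel_measurable_add)
    qed
    finally show ?thesis .
  qed
  have fin: "(\<Sum>k. integral\<^sup>N PP.lim (F k)) < \<top>"
  proof -
    have "(\<Sum>k. integral\<^sup>N PP.lim (F k)) \<le> (\<Sum>k. \<Sum>i\<in>UNIV. \<Sum>j\<in>UNIV. I True i j k + I False i j k)"
      by (rule suminf_le[OF intF]) simp_all
    also have "\<dots> = (\<Sum>i\<in>UNIV. \<Sum>j\<in>UNIV. (\<Sum>k. I True i j k) + (\<Sum>k. I False i j k))"
      by (simp add: suminf_sum suminf_add)
    also have "\<dots> < \<top>"
    proof -
      have "\<And>b i j. (\<Sum>k. I b i j k) < \<top>"
        unfolding I_def trm_Y by (rule A3_inst)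
      then show ?thesis by (simp add: ennreal_sum_less_top ennreal_add_less_top)
    qed
    finally show ?thesis .
  qed
  have sm: "(\<lambda>\<omega>. \<Sum>k. F k \<omega>) \<in> borel_measurable PP.lim"
    using Fm by (rule borel_measurable_suminf_order)
  have "(\<integral>\<^sup>+\<omega>. (\<Sum>k. F k \<omega>) \<partial>PP.lim) < \<infinity>"
    using fin by (simp add: nn_integral_suminf[OF Fm])
  from finite_nn_integral_imp_ae_finite[OF sm this]
  have "AE \<omega> in PP.lim. (\<Sum>k. F k \<omega>) < \<infinity>" .
  then show "AE \<omega> in PP.lim. summable (phi_term \<alpha> (\<lambda>s. Ga (Xc (s - 1) \<omega>) (Nc s \<omega>)) Gpsi (\<lambda>s. Xc s \<omega>) t)"
  proof (rule eventually_mono)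
    fix \<omega> assume "(\<Sum>k. F k \<omega>) < \<infinity>"
    then have "summable (\<lambda>k. norm (phi_term \<alpha> (Aw \<omega>) Gpsi (\<lambda>s. Xc s \<omega>) t k))"
      by (intro summable_suminf_not_top) (auto simp: F_def)
    then show "summable (phi_term \<alpha> (\<lambda>s. Ga (Xc (s - 1) \<omega>) (Nc s \<omega>)) Gpsi (\<lambda>s. Xc s \<omega>) t)"
      unfolding Aw_eq by (rule summable_norm_cancel)
  qed
qed

end

theorem lemma4:
  fixes a :: "real^'d \<Rightarrow> real^'m \<Rightarrow> real^'d"
    and Ga :: "real^'d \<Rightarrow> real^'m \<Rightarrow> real^'d^'d"
    and \<mu> :: "(real^'m) measure"
    and v :: "real^'d \<Rightarrow> real"
    and \<pi> :: "(real^'d) measure"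
    and b0 \<rho>0 \<alpha> :: real
    and \<psi> :: "real^'d \<Rightarrow> real^'l"
    and Gpsi :: "real^'d \<Rightarrow> real^'l^'d"
  assumes noise_prob: "prob_space \<mu>" and noise_sets: "sets \<mu> = sets borel"
    and a_cont: "continuous_on UNIV (\<lambda>(x, n). a x n)"
    and v_cont: "continuous_on UNIV v" and v_ge1: "\<forall>x. 1 \<le> v x"
    \<comment> \<open>(A1) v-uniform ergodicity\<close>
    and pi_prob: "prob_space \<pi>" and pi_sets: "sets \<pi> = sets borel"
    and pi_inv: "invariant_for a \<mu> \<pi>"
    and pi_unique: "\<forall>\<pi>'. prob_space \<pi>' \<and> sets \<pi>' = sets borel \<and> invariant_for a \<mu> \<pi>' \<longrightarrow> \<pi>' = \<pi>"
    and rho0: "0 < \<rho>0" "\<rho>0 < 1"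
    and ergodic: "\<forall>f t x. in_Linf_v v f \<longrightarrow>
         \<bar>Ex_chain a \<mu> x f t - (\<integral>y. f y \<partial>\<pi>)\<bar> \<le> b0 * \<rho>0 ^ t * vnorm v f * v x"
    \<comment> \<open>(A2)\<close>
    and a_deriv: "\<forall>x n. ((\<lambda>y. a y n) has_derivative (\<lambda>h. h v* Ga x n)) (at x)"
    and Ga_cont: "\<forall>n. continuous_on UNIV (\<lambda>x. Ga x n)"
    and Ga_bdd: "\<exists>B. \<forall>x n. norm (Ga x n) \<le> B"
    \<comment> \<open>(A3)\<close>
    and A3: "\<forall>(f :: real^'d \<Rightarrow> real) (g :: real^'d \<Rightarrow> real) gf gg.
         (\<forall>x. (f has_derivative (\<lambda>h. gf x \<bullet> h)) (at x)) \<and> continuous_on UNIV gf \<and>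
         (\<forall>x. (g has_derivative (\<lambda>h. gg x \<bullet> h)) (at x)) \<and> continuous_on UNIV gg \<and>
         in_Linf_v v (\<lambda>x. (f x)\<^sup>2) \<and> in_Linf_v v (\<lambda>x. (g x)\<^sup>2) \<and>
         in_Linf_v v (\<lambda>x. (norm (gf x))\<^sup>2) \<and> in_Linf_v v (\<lambda>x. (norm (gg x))\<^sup>2) \<longrightarrow>
         summable (\<lambda>t. \<bar>\<integral>\<omega>. gf (chain a (fst \<omega>) (snd \<omega>) t) \<bullet>
                                 (sens Ga a (fst \<omega>) (snd \<omega>) t *v gg (fst \<omega>))
                           \<partial>(\<pi> \<Otimes>\<^sub>M (\<Pi>\<^sub>M i\<in>(UNIV::nat set). \<mu>))\<bar>) \<and>
         (\<Sum>t. \<integral>\<^sup>+\<omega>. ennreal \<bar>gf (chain a (fst \<omega>) (snd \<omega>) t) \<bullet>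
                                 (sens Ga a (fst \<omega>) (snd \<omega>) t *v gg (fst \<omega>))\<bar>
                           \<partial>(\<pi> \<Otimes>\<^sub>M (\<Pi>\<^sub>M i\<in>(UNIV::nat set). \<mu>))) < \<top>"
    \<comment> \<open>alpha and psi\<close>
    and alpha: "0 < \<alpha>" "\<alpha> < 1"
    and psi_deriv: "\<forall>x. (\<psi> has_derivative (\<lambda>h. h v* Gpsi x)) (at x)"
    and Gpsi_cont: "continuous_on UNIV Gpsi"
    and psi_L: "in_Linf_v v (\<lambda>x. (norm (\<psi> x))\<^sup>2)"
    and Gpsi_L: "in_Linf_v v (\<lambda>x. (norm (Gpsi x))\<^sup>2)"
  shows "\<exists>(M :: (int \<Rightarrow> (real^'d) \<times> (real^'m)) measure)
            (X :: int \<Rightarrow> (int \<Rightarrow> (real^'d) \<times> (real^'m)) \<Rightarrow> real^'d)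
            (N :: int \<Rightarrow> (int \<Rightarrow> (real^'d) \<times> (real^'m)) \<Rightarrow> real^'m).
      prob_space M \<and>
      (\<forall>t. X t \<in> borel_measurable M \<and> N t \<in> borel_measurable M) \<and>
      prob_space.indep_vars M (\<lambda>_. borel) N UNIV \<and>
      (\<forall>t. distr M borel (N t) = \<mu>) \<and>
      (AE \<omega> in M. \<forall>t. X (t + 1) \<omega> = a (X t \<omega>) (N (t + 1) \<omega>)) \<and>
      (\<forall>t. \<forall>A\<in>sets borel. \<forall>B\<in>sets (\<Pi>\<^sub>M s\<in>(UNIV::nat set). (borel :: (real^'m) measure)).
         measure M {\<omega>\<in>space M. X t \<omega> \<in> A \<and> (\<lambda>s. N (t + 1 + int s) \<omega>) \<in> B}
         = measure M {\<omega>\<in>space M. X t \<omega> \<in> A} *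
           measure M {\<omega>\<in>space M. (\<lambda>s. N (t + 1 + int s) \<omega>) \<in> B}) \<and>
      (\<forall>t. distr M borel (X t) = \<pi>) \<and>
      (AE \<omega> in M. \<forall>t. summable
          (phi_term \<alpha> (\<lambda>s. Ga (X (s - 1) \<omega>) (N s \<omega>)) Gpsi (\<lambda>s. X s \<omega>) t)) \<and>
      (\<forall>k::int.
         distr M (\<Pi>\<^sub>M t\<in>(UNIV::int set). borel)
           (\<lambda>\<omega> t. (X (t + k) \<omega>, phi \<alpha> (\<lambda>s. Ga (X (s - 1) \<omega>) (N s \<omega>)) Gpsi (\<lambda>s. X s \<omega>) (t + k)))
       = distr M (\<Pi>\<^sub>M t\<in>(UNIV::int set). borel)
           (\<lambda>\<omega> t. (X t \<omega>, phi \<alpha> (\<lambda>s. Ga (X (s - 1) \<omega>) (N s \<omega>)) Gpsi (\<lambda>s. X s \<omega>) t)))"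
  proof -
  have mc: "MC a \<mu> \<pi>"
    by (rule MC.intro) (fact noise_prob noise_sets a_cont pi_prob pi_sets pi_inv)+
  have mc2: "MC2 a \<mu> \<pi> Ga Gpsi"
    by (rule MC2.intro[OF mc], rule MC2_axioms.intro) (fact a_deriv Gpsi_cont)+
  have mc3: "MC3 a \<mu> \<pi> Ga Gpsi \<alpha> \<psi> v"
    by (rule MC3.intro[OF mc2], rule MC3_axioms.intro) (fact alpha psi_deriv psi_L Gpsi_L v_ge1 A3)+
  interpret M: MC3 a \<mu> \<pi> Ga Gpsi \<alpha> \<psi> v by (rule mc3)
  show ?thesis
  proof (intro exI conjI)
    show "prob_space M.PP.lim" by (rule M.PP.P.prob_space_axioms)
    show "\<forall>t. M.Xc t \<in> borel_measurable M.PP.lim \<and> M.Nc t \<in> borel_measurable M.PP.lim"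
      using M.Xc_meas M.Nc_meas by blast
    show "prob_space.indep_vars M.PP.lim (\<lambda>_. borel) M.Nc UNIV" by (rule M.indep_N)
    show "\<forall>t. distr M.PP.lim borel (M.Nc t) = \<mu>" using M.distr_Nc by blast
    show "AE \<omega> in M.PP.lim. \<forall>t. M.Xc (t + 1) \<omega> = a (M.Xc t \<omega>) (M.Nc (t + 1) \<omega>)" by (rule M.AE_rec)
    show "\<forall>t. \<forall>A\<in>sets borel. \<forall>B\<in>sets (\<Pi>\<^sub>M s\<in>(UNIV::nat set). (borel :: (real^'m) measure)).
         measure M.PP.lim {\<omega>\<in>space M.PP.lim. M.Xc t \<omega> \<in> A \<and> (\<lambda>s. M.Nc (t + 1 + int s) \<omega>) \<in> B}
         = measure M.PP.lim {\<omega>\<in>space M.PP.lim. M.Xc t \<omega> \<in> A} *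
           measure M.PP.lim {\<omega>\<in>space M.PP.lim. (\<lambda>s. M.Nc (t + 1 + int s) \<omega>) \<in> B}"
      using M.indep_future by blast
    show "\<forall>t. distr M.PP.lim borel (M.Xc t) = \<pi>" using M.distr_Xc by blast
    show "AE \<omega> in M.PP.lim. \<forall>t. summable
          (phi_term \<alpha> (\<lambda>s. Ga (M.Xc (s - 1) \<omega>) (M.Nc s \<omega>)) Gpsi (\<lambda>s. M.Xc s \<omega>) t)"
      by (rule M.AE_summ)
    show "\<forall>k::int.
         distr M.PP.lim (\<Pi>\<^sub>M t\<in>(UNIV::int set). borel)
           (\<lambda>\<omega> t. (M.Xc (t + k) \<omega>, phi \<alpha> (\<lambda>s. Ga (M.Xc (s - 1) \<omega>) (M.Nc s \<omega>)) Gpsi (\<lambda>s. M.Xc s \<omega>) (t + k)))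
       = distr M.PP.lim (\<Pi>\<^sub>M t\<in>(UNIV::int set). borel)
           (\<lambda>\<omega> t. (M.Xc t \<omega>, phi \<alpha> (\<lambda>s. Ga (M.Xc (s - 1) \<omega>) (M.Nc s \<omega>)) Gpsi (\<lambda>s. M.Xc s \<omega>) t))"
      using M.stationary by blast
  qed
qed

end
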